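(* Let $\ell$ be a positive integer and let $B^*=3\times 2^{\ell-1}-2$. The switching system described below (one crossbar switch with a controller, and $2\ell-1$ groups of three 4-to-1 FIFO multiplexers, operated by the routing policy described below) is an optical priority queue with buffer $B^*$; that is, started empty at time $0$, it satisfies properties (P1)–(P5) below with $B=B^*$ at every time $t>0$, for every arrival sequence, every assignment of distinct priorities and every sequence of departure requests.
   Context: Time is slotted ($t=1,2,\dots$), packets have fixed size and one packet traverses a link in one slot, so each link is in state $1$ (carries a packet) or $0$ at each time. An $n\times n$ crossbar switch is a memoryless element that can connect its $n$ inputs to its $n$ outputs by any permutation, packets passing instantaneously. Priority queue. A network element has an arrival link, a departure link, a loss link and a controller. Each arriving packet carries a unique priority. If at the beginning of time $t$ there are $k$ packets in the element (counting the arriving packet, if any) and packet $i$ has the $j$-th highest priority among them, its tag is $\tau_i(t)=j$. Let $a(t),d(t),l(t)\in\{0,1\}$ be the states of the arrival, departure, loss links at time $t$, $c(t)=1$ if the controller issues a departure request at $t$ and $0$ otherwise, and $q(t)$ the number of packets buffered at time $t$. Starting empty at time $0$, the element is a priority queue with buffer $B$ if for every $t>0$: (P1) $q(t)=q(t-1)+a(t)-d(t)-l(t)$; (P2) $d(t)=1$ iff $c(t)=1$ and $q(t-1)+a(t)>0$; (P3) $l(t)=1$ iff $c(t)=0$, $q(t-1)=B$ and $a(t)=1$; (P4) a packet $i$ departing at $t$ has $\tau_i(t)=1$; (P5) a packet $i$ lost at $t$ has $\tau_i(t)=B+1$. 4-to-1 multiplexer with buffer $\tilde B$: an element with $4$ input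 links (states $\tilde a_1(t),\dots,\tilde a_4(t)$), one departure link $\tilde d(t)$ and $3$ loss links $\tilde l_1(t),\tilde l_2(t),\tilde l_3(t)$, with buffer content $\tilde q(t)$, satisfying (M1) $\tilde q(t)=\tilde q(t-1)+\sum_{i=1}^4\tilde a_i(t)-\tilde d(t)-\sum_{i=1}^3\tilde l_i(t)$; (M2) $\tilde d(t)=1$ iff $\tilde q(t-1)+\sum_i\tilde a_i(t)>0$; (M3) $\tilde l_i(t)=1$ iff $\tilde q(t-1)+\sum_{i'}\tilde a_{i'}(t)\ge \tilde B+i+1$; (M4) packets depart in FIFO order. Notation: for integers $a\le b$, $\langle a,b\rangle=\{a,a+1,\dots,b\}$. For $j=1,\dots,\ell$ let $\Psi_j=\langle 2^{j-1},2^j-1\rangle$, and for $j=\ell+1,\dots,2\ell-1$ let $\Psi_j=\langle 3\cdot2^{\ell-1}-2^{2\ell-j},\,3\cdot 2^{\ell-1}-2^{2\ell-j-1}-1\rangle$. Let $B_1=B_{2\ell-1}=1$, $B_j=2^{j-2}$ for $2\le j\le \ell$, and $B_j=2^{2\ell-j-2}$ for $\ell+1\le j\le 2\ell-2$. Structure. For each $j=1,\dots,2\ell-1$, the $j$-th group consists of three 4-to-1 multiplexers each with buffer $B_j$; the group's $12$ input links are indexed $0,\dots,11$, where for $i=0,1,2$ the inputs of the $i$-th multiplexer are the group inputs $i,i+3,i+6,i+9$. Every group input link is fed by a distinct output of a single crossbar switch; the departure output of each multiplexer feeds a distinct input of the switch. The switch also has the external arrival input, a departure output and a loss output. Tags $\tau_i(t)$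 refer to all packets in the whole system (in the multiplexer buffers, on the arrival link). Routing policy at the beginning of each time $t$: (i) if $c(t)=1$, among the packets leaving the multiplexers of groups $1$ and $2$ and the arriving packet (if any), the one with highest priority is sent to the departure link; (ii) if $c(t)=0$, $a(t)=1$ and $q(t-1)=B^*$, among the arriving packet and the packets leaving the multiplexers of group $2\ell-1$, the one with lowest priority is sent to the loss link; (iii) every other packet $i$ entering the switch at $t$ is sent to group $j$ with $\tau_i(t)\in\Psi_j$. If $k$ packets are sent to group $j$ at time $t$ and $u_j(t)$ is the index of the group input last used before $t$ (with $u_j(1)=0$), they use group inputs $(u_j(t)+1)\bmod 12,\dots,(u_j(t)+k)\bmod 12$, and $u_j(t+1)=(u_j(t)+k)\bmod 12$. *)

theory Defs
  imports Main
begin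

definition Bstar :: "nat \<Rightarrow> nat" where
  "Bstar l = 3 * 2 ^ (l - 1) - 2"

definition Psi :: "nat \<Rightarrow> nat \<Rightarrow> nat set" where
  "Psi l j = (if j \<le> l then {2 ^ (j - 1) .. 2 ^ j - 1}
              else {3 * 2 ^ (l - 1) - 2 ^ (2 * l - j) .. 3 * 2 ^ (l - 1) - 2 ^ (2 * l - j - 1) - 1})"

definition Bmux :: "nat \<Rightarrow> nat \<Rightarrow> nat" where
  "Bmux l j = (if j = 1 \<or> j = 2 * l - 1 then 1
               else if j \<le> l then 2 ^ (j - 2) else 2 ^ (2 * l - j - 2))"

definition grps :: "nat \<Rightarrow> nat set" where
  "grps l = {1 .. 2 * l - 1}"

text \<open>Group to which a packet with tag k is sent by rule (iii).  Tags beyond B* (which the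
  informal policy leaves unspecified) are sent to the last group 2l-1.\<close>
definition assigned :: "nat \<Rightarrow> nat \<Rightarrow> nat \<Rightarrow> bool" where
  "assigned l k j \<longleftrightarrow> k \<in> Psi l j \<or> (j = 2 * l - 1 \<and> Bstar l < k)"

text \<open>A packet is identified by its arrival time t (at most one packet arrives per slot).\<close>
definition arr_set :: "(nat \<Rightarrow> bool) \<Rightarrow> nat \<Rightarrow> nat set" where
  "arr_set a t = (if a t then {t} else {})"

text \<open>Packets departing at time n from the multiplexers of the groups in J
  (they are on the links towards the switch and enter the switch at time n+1).\<close>
definition outs :: "nat \<Rightarrow> (nat \<Rightarrow> nat \<Rightarrow> nat \<Rightarrow> nat option) \<Rightarrow> nat \<Rightarrow> nat set \<Rightarrow> nat set" where
  "outs l out n J = {p. \<exists>j \<in> J \<inter> grps l. \<exists>m < 3. out n j m = Some p}"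

definition stored :: "nat \<Rightarrow> (nat \<Rightarrow> nat \<Rightarrow> nat \<Rightarrow> nat list) \<Rightarrow> (nat \<Rightarrow> nat \<Rightarrow> nat \<Rightarrow> nat option)
    \<Rightarrow> nat \<Rightarrow> nat set" where
  "stored l buf out n = (\<Union>j \<in> grps l. \<Union>m \<in> {..<3}. set (buf n j m)) \<union> outs l out n (grps l)"

definition qsys :: "nat \<Rightarrow> (nat \<Rightarrow> nat \<Rightarrow> nat \<Rightarrow> nat list) \<Rightarrow> (nat \<Rightarrow> nat \<Rightarrow> nat \<Rightarrow> nat option)
    \<Rightarrow> nat \<Rightarrow> nat" where
  "qsys l buf out n = card (stored l buf out n)"

definition tag :: "nat \<Rightarrow> (nat \<Rightarrow> bool) \<Rightarrow> (nat \<Rightarrow> 'p::linorder) \<Rightarrow> (nat \<Rightarrow> nat \<Rightarrow> nat \<Rightarrow> nat list)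
    \<Rightarrow> (nat \<Rightarrow> nat \<Rightarrow> nat \<Rightarrow> nat option) \<Rightarrow> nat \<Rightarrow> nat \<Rightarrow> nat" where
  "tag l a prio buf out t p =
     card {p' \<in> stored l buf out (t - 1) \<union> arr_set a t. prio p \<le> prio p'}"

text \<open>buf n j m : FIFO content (head first) of multiplexer m of group j at the end of time n;
  out n j m : packet departing that multiplexer at time n;
  dep t / loss t : packet on the departure / loss link of the switch at time t;
  route t j g : packet on input g (0..11) of group j at time t;
  u t j : the index u_j(t).\<close>
definition sys_run :: "nat \<Rightarrow> (nat \<Rightarrow> bool) \<Rightarrow> (nat \<Rightarrow> 'p::linorder) \<Rightarrow> (nat \<Rightarrow> bool)
    \<Rightarrow> (nat \<Rightarrow> nat \<Rightarrow> nat \<Rightarrow> nat list) \<Rightarrow> (nat \<Rightarrow> nat \<Rightarrow> nat \<Rightarrow> nat option)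
    \<Rightarrow> (nat \<Rightarrow> nat option) \<Rightarrow> (nat \<Rightarrow> nat option) \<Rightarrow> (nat \<Rightarrow> nat \<Rightarrow> nat \<Rightarrow> nat option)
    \<Rightarrow> (nat \<Rightarrow> nat \<Rightarrow> nat) \<Rightarrow> bool" where
  "sys_run l a prio c buf out dep loss route u \<longleftrightarrow>
     (\<forall>j m. buf 0 j m = [] \<and> out 0 j m = None) \<and>
     (\<forall>j. u 1 j = 0) \<and>
     (\<forall>n. let t = Suc n;
              E = arr_set a t \<union> outs l out n (grps l);
              C1 = arr_set a t \<union> outs l out n {1, 2};
              C2 = arr_set a t \<union> outs l out n {2 * l - 1};
              tg = tag l a prio buf out t;
              R = (\<lambda>j. {p \<in> E - set_option (dep t) - set_option (loss t). assigned l (tg p) j})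
          in
            \<comment> \<open>rule (i)\<close>
            (if c t \<and> C1 \<noteq> {}
             then (\<exists>p. dep t = Some p \<and> p \<in> C1 \<and> (\<forall>p' \<in> C1. prio p' \<le> prio p))
             else dep t = None) \<and>
            \<comment> \<open>rule (ii)\<close>
            (if \<not> c t \<and> a t \<and> qsys l buf out n = Bstar l
             then (\<exists>p. loss t = Some p \<and> p \<in> C2 \<and> (\<forall>p' \<in> C2. prio p \<le> prio p'))
             else loss t = None) \<and>
            \<comment> \<open>rule (iii), with the round-robin use of the 12 group inputs\<close>
            (\<forall>j \<in> grps l.
               let k = card (R j);
                   U = {(u t j + i) mod 12 | i. 1 \<le> i \<and> i \<le> k}
               in (\<forall>g < 12. route t j g \<noteq> None \<longleftrightarrow> g \<in> U) \<and>
                  bij_betw (\<lambda>g. the (route t j g)) U (R j) \<and>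
                  u (Suc t) j = (u t j + k) mod 12) \<and>
            \<comment> \<open>the 4-to-1 FIFO multiplexers (M1)-(M4); multiplexer m of group j has inputs m, m+3, m+6, m+9\<close>
            (\<forall>j \<in> grps l. \<forall>m < 3.
               \<exists>xs. distinct xs \<and>
                    set xs = {p. \<exists>g < 12. g mod 3 = m \<and> route t j g = Some p} \<and>
                    (let L = buf n j m @ xs in
                       out t j m = (if L = [] then None else Some (hd L)) \<and>
                       buf t j m \<in> set (subseqs (tl L)) \<and>
                       length (buf t j m) = min (Bmux l j) (length L - 1))))"

definition priority_queue :: "nat \<Rightarrow> (nat \<Rightarrow> bool) \<Rightarrow> (nat \<Rightarrow> bool) \<Rightarrow> (nat \<Rightarrow> nat)
    \<Rightarrow> (nat \<Rightarrow> 'k option) \<Rightarrow> (nat \<Rightarrow> 'k option) \<Rightarrow> (nat \<Rightarrow> 'k \<Rightarrow> nat) \<Rightarrow> bool" where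
  "priority_queue B a c q dep loss tg \<longleftrightarrow>
     q 0 = 0 \<and>
     (\<forall>t > 0.
        int (q t) = int (q (t - 1)) + of_bool (a t) - of_bool (dep t \<noteq> None) - of_bool (loss t \<noteq> None) \<and>
        (dep t \<noteq> None \<longleftrightarrow> c t \<and> q (t - 1) + of_bool (a t) > 0) \<and>
        (loss t \<noteq> None \<longleftrightarrow> \<not> c t \<and> q (t - 1) = B \<and> a t) \<and>
        (\<forall>i. dep t = Some i \<longrightarrow> tg t i = 1) \<and>
        (\<forall>i. loss t = Some i \<longrightarrow> tg t i = B + 1))"

end

theory Submission
  imports Defs "HOL-Library.Sublist"
begin

definition lo :: "nat \<Rightarrow> nat \<Rightarrow> nat" where
  "lo l j = (if j \<le> l then 2^(j-1) else 3*2^(l-1) - 2^(2*l-j))"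
definition hi :: "nat \<Rightarrow> nat \<Rightarrow> nat" where
  "hi l j = (if j = 2*l-1 then Bstar l + 1 else if j \<le> l then 2^j - 1 else 3*2^(l-1) - 2^(2*l-j-1) - 1)"
definition Mb :: "nat \<Rightarrow> nat \<Rightarrow> nat" where
  "Mb l j = (if j \<le> l then (if j \<le> 2 then 1 else 2^(j-2)) else (if 2*l-j \<le> 2 then 1 else 2^(2*l-j-2)))"

lemma pow2_split: "1 \<le> i \<Longrightarrow> (2::nat)^i = 2 * 2^(i-1)"
  by (metis One_nat_def Suc_pred less_eq_Suc_le power_Suc)

lemma pow2_le: "i \<le> k \<Longrightarrow> (2::nat)^i \<le> 2^k"
  by simp

lemma pow2_pos: "(1::nat) \<le> 2^i" by simp

lemma case_split_j:
  fixes l j :: nat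
  assumes "1 \<le> l" "1 \<le> j" "j \<le> 2*l-1"
  obtains (one) "l = 1" "j = 1"
  | (up) "2 \<le> l" "j \<le> l"
  | (low) i where "2 \<le> l" "j = 2*l - i" "1 \<le> i" "i \<le> l - 1"
proof -
  consider "l = 1" | "2 \<le> l \<and> j \<le> l" | "2 \<le> l \<and> l < j" using assms by linarith
  then show ?thesis
  proof cases
    case 1 then show ?thesis using assms one by auto
  next
    case 2 then show ?thesis using up by auto
  next
    case 3 then show ?thesis using assms by (intro low[of "2*l-j"]) auto
  qed
qed

lemma up_vals:
  assumes "2 \<le> l" "1 \<le> j" "j \<le> l"
  shows "lo l j = 2^(j-1)" "hi l j = 2^j - 1" "Mb l j = (if j \<le> 2 then 1 else 2^(j-2))"
    "Bmux l j = (if j = 1 then 1 else 2^(j-2))"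
  using assms by (auto simp: lo_def hi_def Mb_def Bmux_def)

lemma low_vals:
  assumes "2 \<le> l" "j = 2*l - i" "1 \<le> i" "i \<le> l - 1"
  shows "lo l j = 3*2^(l-1) - 2^i" "hi l j = (if i = 1 then 3*2^(l-1) - 1 else 3*2^(l-1) - 2^(i-1) - 1)"
    "Mb l j = (if i \<le> 2 then 1 else 2^(i-2))"
    "Bmux l j = (if i = 1 then 1 else 2^(i-2))"
proof -
  have "(2::nat)^1 \<le> 2^(l-1)" using assms(1) by (intro power_increasing) auto
  then have "2 \<le> (2::nat)^(l-1)" by simp
  then show "lo l j = 3*2^(l-1) - 2^i" "hi l j = (if i = 1 then 3*2^(l-1) - 1 else 3*2^(l-1) - 2^(i-1) - 1)"
    "Mb l j = (if i \<le> 2 then 1 else 2^(i-2))"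
    "Bmux l j = (if i = 1 then 1 else 2^(i-2))"
  using assms by (auto simp: lo_def hi_def Mb_def Bmux_def Bstar_def)
qed

lemma B_val: "1 \<le> l \<Longrightarrow> Bstar l = 3*2^(l-1) - 2"
  by (simp add: Bstar_def)

lemma P2: "2 \<le> l \<Longrightarrow> 2 \<le> (2::nat)^(l-1)"
proof -
  assume "2 \<le> l"
  then have "(2::nat)^1 \<le> 2^(l-1)" by (intro power_increasing) auto
  then show ?thesis by simp
qed

lemma P4: "3 \<le> l \<Longrightarrow> 4 \<le> (2::nat)^(l-1)"
proof -
  assume "3 \<le> l"
  then have "(2::nat)^2 \<le> 2^(l-1)" by (intro power_increasing) auto
  then show ?thesis by simp
qed

lemma pow_sub_rel: "k \<ge> 1 \<Longrightarrow> (2::nat)^k = 2 * 2^(k-1)"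
  by (metis One_nat_def Suc_pred less_eq_Suc_le power_Suc)

lemma cls:
  fixes l j :: nat
  assumes "1 \<le> l" "1 \<le> j" "j \<le> 2*l-1"
  obtains (c1) "l = 1" "j = 1" "lo l j = 1" "hi l j = 2" "Mb l j = 1" "Bmux l j = 1" "Bstar l = 1"
  | (u1) "2 \<le> l" "j = 1" "lo l j = 1" "hi l j = 1" "Mb l j = 1" "Bmux l j = 1"
  | (u2) "2 \<le> l" "j = 2" "lo l j = 2" "hi l j = 3" "Mb l j = 1" "Bmux l j = 1"
  | (u3) R where "3 \<le> j" "j \<le> l" "R = 2^(j-2)" "2 \<le> R" "2*R \<le> 2^(l-1)" "lo l j = 2*R"
      "hi l j = 4*R - 1" "Mb l j = R" "Bmux l j = R"
  | (d1) "2 \<le> l" "j = 2*l-1" "lo l j = 3*2^(l-1) - 2" "hi l j = 3*2^(l-1) - 1" "Mb l j = 1" "Bmux l j = 1"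
  | (d2) "3 \<le> l" "j = 2*l-2" "lo l j = 3*2^(l-1) - 4" "hi l j = 3*2^(l-1) - 3" "Mb l j = 1" "Bmux l j = 1"
  | (d3) i R where "l < j" "j = 2*l - i" "3 \<le> i" "i \<le> l-1" "R = 2^(i-2)" "2 \<le> R" "4*R \<le> 2^(l-1)"
      "lo l j = 3*2^(l-1) - 4*R" "hi l j = 3*2^(l-1) - 2*R - 1" "Mb l j = R" "Bmux l j = R"
proof -
  consider "l = 1" | "2 \<le> l" "j = 1" | "2 \<le> l" "j = 2" | "3 \<le> j" "j \<le> l"
    | "2 \<le> l" "j = 2*l-1" | "3 \<le> l" "j = 2*l-2" | "l < j" "3 \<le> 2*l - j" using assms by linarith
  then show ?thesis
  proof cases
    case 1
    then have "j = 1" using assms by auto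
    then show ?thesis using 1 c1 by (simp add: lo_def hi_def Mb_def Bmux_def Bstar_def)
  next
    case 2
    then have "j \<noteq> 2*l-1" by auto
    then show ?thesis using 2 u1 by (simp add: lo_def hi_def Mb_def Bmux_def)
  next
    case 3
    then have "j \<noteq> 2*l-1" by auto
    then show ?thesis using 3 u2 by (simp add: lo_def hi_def Mb_def Bmux_def)
  next
    case 4
    define R where "R = (2::nat)^(j-2)"
    have a: "(2::nat)^(j-1) = 2*R" using 4 pow_sub_rel[of "j-1"] by (simp add: R_def numeral_2_eq_2)
    have b: "(2::nat)^j = 4*R" using 4 pow_sub_rel[of j] a by simp
    have c: "2 \<le> R" unfolding R_def using P2[of "j-1"] 4 by (simp add: numeral_2_eq_2)
    have d: "2*R \<le> 2^(l-1)" using a 4 by (metis diff_le_mono pow2_le)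
    have e: "j \<noteq> 2*l-1" using 4 by auto
    show ?thesis using u3[of R] 4 a b c d e by (simp add: lo_def hi_def Mb_def Bmux_def R_def)
  next
    case 5
    have p: "2 \<le> (2::nat)^(l-1)" using 5 P2 by auto
    have e: "2*l - j = 1" "2*l-j-1 = 0" "\<not> j \<le> l" using 5 by auto
    show ?thesis using d1 5 e p by (simp add: lo_def hi_def Mb_def Bmux_def Bstar_def)
  next
    case 6
    have p: "4 \<le> (2::nat)^(l-1)" using 6 P4 by auto
    have e: "2*l - j = 2" "2*l-j-1 = 1" "\<not> j \<le> l" "j \<noteq> 2*l-1" using 6 by auto
    show ?thesis using d2 6 e p by (simp add: lo_def hi_def Mb_def Bmux_def Bstar_def)
  next
    case 7
    define i where "i = 2*l - j"
    define R where "R = (2::nat)^(i-2)"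
    have i: "j = 2*l - i" "3 \<le> i" "i \<le> l - 1" using 7 assms by (auto simp: i_def)
    have a: "(2::nat)^(i-1) = 2*R" using i pow_sub_rel[of "i-1"] by (simp add: R_def numeral_2_eq_2)
    have b: "(2::nat)^i = 4*R" using i pow_sub_rel[of i] a by simp
    have c: "2 \<le> R" unfolding R_def using P2[of "i-1"] i by (simp add: numeral_2_eq_2)
    have d: "4*R \<le> 2^(l-1)" using b i by (metis pow2_le)
    have e: "j \<noteq> 2*l-1" "\<not> j \<le> l" "2*l-j = i" "2*l-j-1 = i-1" "2*l-j-2 = i-2" "j \<noteq> 1" using 7 i by auto
    have v1: "lo l j = 3*2^(l-1) - 4*R" using e b by (simp add: lo_def)
    have v2: "hi l j = 3*2^(l-1) - 2*R - 1" using e a by (simp add: hi_def)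
    have v3: "Mb l j = R" using e i by (simp add: Mb_def R_def)
    have v4: "Bmux l j = R" using e i by (simp add: Bmux_def R_def)
    show ?thesis by (rule d3[OF 7(1) i(1) i(2) i(3) R_def c d v1 v2 v3 v4])
  qed
qed

lemma Pfacts: "1 \<le> l \<Longrightarrow> Bstar l = 3*2^(l-1) - 2 \<and> 1 \<le> (2::nat)^(l-1)"
  by (simp add: Bstar_def)

lemma F_basic0:
  fixes l j :: nat
  assumes "1 \<le> l" "1 \<le> j" "j \<le> 2*l-1"
  shows "(1 \<le> lo l j) \<and> (lo l j \<le> hi l j) \<and> (Suc (hi l j) - lo l j \<le> 2 * Mb l j) \<and>
    (1 \<le> Mb l j) \<and> (Mb l j \<le> Bmux l j + 1) \<and>
    (3 \<le> j \<longrightarrow> Mb l j + 1 < lo l j) \<and>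
    (j \<noteq> 2*l-1 \<longrightarrow> hi l j + Mb l j < Bstar l + 1) \<and>
    (j \<le> 2 \<or> j = 2*l-1 \<longrightarrow> Mb l j = 1) \<and> (lo l j \<le> Bstar l + 1)"
  using assms
proof (cases rule: cls)
  case c1
  then show ?thesis by auto
next
  case u1
  have p: "2 \<le> (2::nat)^(l-1)" using u1 P2 by auto
  have b: "Bstar l = 3*2^(l-1) - 2" using assms Pfacts by auto
  show ?thesis using u1 p b by (intro conjI impI; linarith)
next
  case u2
  have p: "2 \<le> (2::nat)^(l-1)" using u2 P2 by auto
  have b: "Bstar l = 3*2^(l-1) - 2" using assms Pfacts by auto
  show ?thesis using u2 p b by (intro conjI impI; linarith)
next
  case (u3 R)
  have b: "Bstar l = 3*2^(l-1) - 2" using assms Pfacts by auto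
  have j: "j \<noteq> 2*l-1" "\<not> j \<le> 2" "3 \<le> j" using u3(1,2) by linarith+
  note f = u3(4-9)
  show ?thesis using j f b by (intro conjI impI; linarith)
next
  case d1
  have p: "2 \<le> (2::nat)^(l-1)" using d1 P2 by auto
  have b: "Bstar l = 3*2^(l-1) - 2" using assms Pfacts by auto
  show ?thesis using d1 p b by (intro conjI impI; linarith)
next
  case d2
  have p: "4 \<le> (2::nat)^(l-1)" using d2 P4 by auto
  have b: "Bstar l = 3*2^(l-1) - 2" using assms Pfacts by auto
  show ?thesis using d2 p b by (intro conjI impI; linarith)
next
  case (d3 i R)
  have b: "Bstar l = 3*2^(l-1) - 2" using assms Pfacts by auto
  have j: "j \<noteq> 2*l-1" "\<not> j \<le> 2" "3 \<le> j" using d3(1-4) assms by linarith+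
  have a1: "lo l j + 4*R = 3*2^(l-1)" using d3(7,8) by linarith
  have a2: "hi l j + 2*R + 1 = 3*2^(l-1)" using d3(6,7,9) by linarith
  have a3: "Bstar l + 2 = 3*2^(l-1)" using b d3(6,7) by linarith
  note f = d3(6,7,10,11)
  show ?thesis using j f a1 a2 a3 by (intro conjI impI; linarith)
qed

lemma F_basic:
  fixes l j :: nat
  assumes "1 \<le> l" "1 \<le> j" "j \<le> 2*l-1"
  shows "1 \<le> lo l j" "lo l j \<le> hi l j" "Suc (hi l j) - lo l j \<le> 2 * Mb l j"
    "1 \<le> Mb l j" "Mb l j \<le> Bmux l j + 1"
    "3 \<le> j \<Longrightarrow> Mb l j + 1 < lo l j"
    "j \<noteq> 2*l-1 \<Longrightarrow> hi l j + Mb l j < Bstar l + 1"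
    "j \<le> 2 \<or> j = 2*l-1 \<Longrightarrow> Mb l j = 1"
    "lo l j \<le> Bstar l + 1"
  using F_basic0[OF assms] by auto

lemma Psi_eq:
  fixes l j :: nat
  assumes "1 \<le> l" "1 \<le> j" "j \<le> 2*l-1"
  shows "Psi l j = {lo l j .. (if j = 2*l-1 then Bstar l else hi l j)}"
proof (cases "j = 2*l-1")
  case True
  show ?thesis
  proof (cases "l = 1")
    case True
    then show ?thesis using \<open>j = 2*l-1\<close> by (simp add: Psi_def lo_def Bstar_def)
  next
    case False
    then have "\<not> j \<le> l" "2*l-j-1 = 0" using \<open>j = 2*l-1\<close> assms by auto
    then show ?thesis using \<open>j = 2*l-1\<close> assms by (simp add: Psi_def lo_def Bstar_def numeral_2_eq_2)
  qed
next
  case False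
  then show ?thesis by (simp add: Psi_def lo_def hi_def)
qed

lemma F_assigned:
  fixes l j k :: nat
  assumes "1 \<le> l" "1 \<le> j" "j \<le> 2*l-1" "k \<le> Bstar l + 1"
  shows "assigned l k j \<longleftrightarrow> lo l j \<le> k \<and> k \<le> hi l j"
proof -
  have h: "j = 2*l-1 \<Longrightarrow> hi l j = Bstar l + 1" by (simp add: hi_def)
  have lb: "lo l j \<le> Bstar l" if "j = 2*l - 1"
  proof (cases "l = 1")
    case True then show ?thesis using that by (simp add: lo_def Bstar_def)
  next
    case False
    then have "\<not> j \<le> l" "2*l-j = 1" using that assms by auto
    then show ?thesis by (simp add: lo_def Bstar_def)
  qed
  show ?thesis using assms h lb unfolding assigned_def Psi_eq[OF assms(1-3)] by auto
qed

lemma pair: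
  fixes l j :: nat
  assumes "1 \<le> l" "1 \<le> j" "j < 2*l-1"
  shows "lo l (Suc j) = Suc (hi l j)" "Mb l j \<le> Suc (hi l (Suc j)) - lo l (Suc j)"
    "Mb l (Suc j) \<le> Suc (hi l j) - lo l j"
proof -
  have l2: "2 \<le> l" using assms by auto
  have "lo l (Suc j) = Suc (hi l j) \<and> Mb l j \<le> Suc (hi l (Suc j)) - lo l (Suc j) \<and>
    Mb l (Suc j) \<le> Suc (hi l j) - lo l j"
  proof -
    consider "j = 1" | "2 \<le> j" "j < l" | "j = l" | "l < j" using assms by linarith
    then show ?thesis
    proof cases
      case 1
      have "lo l 1 = 1" "hi l 1 = 1" "Mb l 1 = 1" "lo l 2 = 2" "hi l 2 = 3" "Mb l 2 = 1"
        using l2 by (auto simp: lo_def hi_def Mb_def)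
      then show ?thesis using 1 by (simp add: numeral_2_eq_2)
    next
      case 2
      define A where "A = (2::nat)^(j-1)"
      have v: "lo l j = A" "hi l j = 2^j - 1" "lo l (Suc j) = 2^j" "hi l (Suc j) = 2^(Suc j) - 1"
        "Mb l j = (if j \<le> 2 then 1 else 2^(j-2))" "Mb l (Suc j) = 2^(j-1)"
        using up_vals[of l j] up_vals[of l "Suc j"] 2 l2 by (auto simp: A_def)
      have a1: "(2::nat)^j = 2*A" using 2 pow_sub_rel[of j] by (simp add: A_def)
      have a2: "(2::nat)^(Suc j) = 4*A" using a1 by simp
      have a3: "Mb l j \<le> A" using v(5) 2 unfolding A_def by (auto intro: power_increasing)
      have a4: "1 \<le> A" by (simp add: A_def)
      show ?thesis using v a1 a2 a3 a4 unfolding A_def[symmetric] by simp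
    next
      case 3
      note jl = this
      consider "l = 2" | "l = 3" | "4 \<le> l" using l2 by linarith
      then show ?thesis
      proof cases
        case 1
        then show ?thesis using jl by (simp add: lo_def hi_def Mb_def Bstar_def)
      next
        case 2
        then show ?thesis using jl by (simp add: lo_def hi_def Mb_def Bstar_def)
      next
        case 3
        then have l4: "4 \<le> l" .
        define X where "X = (2::nat)^(l-3)"
        have x1: "(2::nat)^(l-2) = 2*X" using l4 pow_sub_rel[of "l-2"] by (simp add: X_def numeral_3_eq_3 numeral_2_eq_2)
        have x2: "(2::nat)^(l-1) = 4*X" using l4 pow_sub_rel[of "l-1"] x1 by (simp add: numeral_2_eq_2)
        have x3: "(2::nat)^l = 8*X" using l4 pow_sub_rel[of "l"] x2 by simp
        have x0: "1 \<le> X" by (simp add: X_def)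
        have v: "lo l j = 4*X" "hi l j = 8*X - 1" "Mb l j = 2*X"
          using up_vals[of l j] jl l4 x1 x2 x3 by auto
        have e: "2*l - Suc l = l - 1" "2*l - Suc l - 1 = l - 2" "2*l - Suc l - 2 = l - 3"
          "\<not> Suc l \<le> l" "Suc l \<noteq> 2*l-1" "\<not> 2*l - Suc l \<le> 2" using l4 by auto
        have w: "lo l (Suc j) = 3*(4*X) - 4*X" "hi l (Suc j) = 3*(4*X) - 2*X - 1" "Mb l (Suc j) = X"
          using jl e x1 x2 by (simp_all add: lo_def hi_def Mb_def X_def)
        show ?thesis using v w x0 by simp
      qed
    next
      case 4
      define i where "i = 2*l - j"
      have i: "2 \<le> i" "i \<le> l - 1" "j = 2*l - i" using 4 assms by (auto simp: i_def)
      consider "i = 2" | "i = 3" | "4 \<le> i" using i by linarith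
      then show ?thesis
      proof cases
        case 1
        have l3: "3 \<le> l" using i 1 by auto
        have p: "4 \<le> (2::nat)^(l-1)" using P4 l3 by auto
        have e: "2*l - j = 2" "2*l - Suc j = 1" "\<not> j \<le> l" "\<not> Suc j \<le> l" "j \<noteq> 2*l-1" "Suc j = 2*l-1"
          using 1 i l3 by auto
        have v: "lo l j = 3*2^(l-1) - 4" "hi l j = 3*2^(l-1) - 3" "Mb l j = 1"
          "lo l (Suc j) = 3*2^(l-1) - 2" "hi l (Suc j) = 3*2^(l-1) - 1" "Mb l (Suc j) = 1"
          using e p by (simp_all add: lo_def hi_def Mb_def Bstar_def)
        have w: "lo l j + 4 = 3*2^(l-1)" "hi l j + 3 = 3*2^(l-1)" "lo l (Suc j) + 2 = 3*2^(l-1)"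
          "hi l (Suc j) + 1 = 3*2^(l-1)" using v p by linarith+
        show ?thesis using w v(3,6) p by (intro conjI; linarith)
      next
        case 2
        have l3: "4 \<le> l" using i 2 by auto
        have p: "8 \<le> (2::nat)^(l-1)"
        proof -
          have "(2::nat)^3 \<le> 2^(l-1)" using l3 by (intro power_increasing) auto
          then show ?thesis by simp
        qed
        have e: "2*l - j = 3" "2*l - Suc j = 2" "\<not> j \<le> l" "\<not> Suc j \<le> l" "j \<noteq> 2*l-1" "Suc j \<noteq> 2*l-1"
          "2*l - j - 1 = 2" "2*l-j-2 = 1" "2*l - Suc j - 1 = 1"
          using 2 i l3 by auto
        have v: "lo l j = 3*2^(l-1) - 8" "hi l j = 3*2^(l-1) - 5" "Mb l j = 2"
          "lo l (Suc j) = 3*2^(l-1) - 4" "hi l (Suc j) = 3*2^(l-1) - 3" "Mb l (Suc j) = 1"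
          using e by (simp_all add: lo_def hi_def Mb_def Bstar_def)
        have w: "lo l j + 8 = 3*2^(l-1)" "hi l j + 5 = 3*2^(l-1)" "lo l (Suc j) + 4 = 3*2^(l-1)"
          "hi l (Suc j) + 3 = 3*2^(l-1)" using v p by linarith+
        show ?thesis using w v(3,6) p by (intro conjI; linarith)
      next
        case 3
        define X where "X = (2::nat)^(i-3)"
        have x1: "(2::nat)^(i-2) = 2*X" using 3 pow_sub_rel[of "i-2"] by (simp add: X_def numeral_3_eq_3 numeral_2_eq_2)
        have x2: "(2::nat)^(i-1) = 4*X" using 3 pow_sub_rel[of "i-1"] x1 by (simp add: numeral_2_eq_2)
        have x3: "(2::nat)^i = 8*X" using 3 pow_sub_rel[of "i"] x2 by simp
        have x0: "1 \<le> X" by (simp add: X_def)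
        have p: "8*X \<le> 2^(l-1)" using x3 i by (metis pow2_le)
        have e: "2*l - j = i" "2*l - Suc j = i - 1" "\<not> j \<le> l" "\<not> Suc j \<le> l" "j \<noteq> 2*l-1" "Suc j \<noteq> 2*l-1"
          "2*l - j - 1 = i - 1" "2*l-j-2 = i - 2" "2*l - Suc j - 1 = i - 2" "2*l - Suc j - 2 = i - 3"
          "\<not> 2*l - j \<le> 2" "\<not> 2*l - Suc j \<le> 2"
          using 3 i by auto
        have v: "lo l j = 3*2^(l-1) - 8*X" "hi l j = 3*2^(l-1) - 4*X - 1" "Mb l j = 2*X"
          "lo l (Suc j) = 3*2^(l-1) - 4*X" "hi l (Suc j) = 3*2^(l-1) - 2*X - 1" "Mb l (Suc j) = X"
          using e x1 x2 x3 by (simp_all add: lo_def hi_def Mb_def X_def)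
        have w1: "lo l j + 8*X = 3*2^(l-1)" using v(1) p by linarith
        have w2: "hi l j + 4*X + 1 = 3*2^(l-1)" using v(2) p x0 by linarith
        have w3: "lo l (Suc j) + 4*X = 3*2^(l-1)" using v(4) p by linarith
        have w4: "hi l (Suc j) + 2*X + 1 = 3*2^(l-1)" using v(5) p x0 by linarith
        note w = w1 w2 w3 w4
        show ?thesis using w v(3,6) p x0 by (intro conjI; linarith)
      qed
    qed
  qed
  then show "lo l (Suc j) = Suc (hi l j)" "Mb l j \<le> Suc (hi l (Suc j)) - lo l (Suc j)"
    "Mb l (Suc j) \<le> Suc (hi l j) - lo l j" by auto
qed

lemma hi_lt_lo:
  fixes l j j' :: nat
  assumes "1 \<le> l" "1 \<le> j" "j < j'" "j' \<le> 2*l-1"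
  shows "hi l j < lo l j'"
  using assms(3,4)
proof (induction j')
  case 0 then show ?case by simp
next
  case (Suc j')
  show ?case
  proof (cases "j = j'")
    case True
    then show ?thesis using pair(1)[of l j] assms Suc by auto
  next
    case False
    then have "j < j'" using Suc by auto
    then have "hi l j < lo l j'" using Suc by auto
    moreover have "lo l j' \<le> hi l j'" using F_basic(2)[of l j'] assms \<open>j < j'\<close> Suc by auto
    moreover have "lo l (Suc j') = Suc (hi l j')" using pair(1)[of l j'] assms \<open>j < j'\<close> Suc by auto
    ultimately show ?thesis by auto
  qed
qed

lemma lo_mono:
  fixes l j j' :: nat
  assumes "1 \<le> l" "1 \<le> j" "j \<le> j'" "j' \<le> 2*l-1"
  shows "lo l j \<le> lo l j'" "hi l j \<le> hi l j'"
proof -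
  show "lo l j \<le> lo l j'"
  proof (cases "j = j'")
    case False
    then have "hi l j < lo l j'" using hi_lt_lo assms by auto
    then show ?thesis using F_basic(2)[of l j] assms by auto
  qed simp
  show "hi l j \<le> hi l j'"
  proof (cases "j = j'")
    case False
    then have "hi l j < lo l j'" using hi_lt_lo assms by auto
    then show ?thesis using F_basic(2)[of l j'] assms by auto
  qed simp
qed

lemma grp_unique:
  fixes l j j' k :: nat
  assumes "1 \<le> l" "1 \<le> j" "j \<le> 2*l-1" "1 \<le> j'" "j' \<le> 2*l-1"
    "lo l j \<le> k" "k \<le> hi l j" "lo l j' \<le> k" "k \<le> hi l j'"
  shows "j = j'"
proof (rule ccontr)
  assume "j \<noteq> j'"
  then consider "j < j'" | "j' < j" by linarith
  then show False
  proof cases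
    case 1 then show False using hi_lt_lo[of l j j'] assms by auto
  next
    case 2 then show False using hi_lt_lo[of l j' j] assms by auto
  qed
qed

lemma grp_exists:
  fixes l k :: nat
  assumes "1 \<le> l" "1 \<le> k" "k \<le> Bstar l + 1"
  shows "\<exists>j. 1 \<le> j \<and> j \<le> 2*l-1 \<and> lo l j \<le> k \<and> k \<le> hi l j"
proof -
  have "\<forall>k. 1 \<le> k \<longrightarrow> k \<le> hi l j \<longrightarrow> (\<exists>j'. 1 \<le> j' \<and> j' \<le> j \<and> lo l j' \<le> k \<and> k \<le> hi l j')"
    if "1 \<le> j" "j \<le> 2*l-1" for j
    using that
  proof (induction j)
    case 0 then show ?case by simp
  next
    case (Suc j)
    show ?case
    proof (intro allI impI)
      fix k assume k: "1 \<le> k" "k \<le> hi l (Suc j)"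
      show "\<exists>j'. 1 \<le> j' \<and> j' \<le> Suc j \<and> lo l j' \<le> k \<and> k \<le> hi l j'"
      proof (cases "j = 0")
        case True
        then have "lo l (Suc j) = 1" using assms by (simp add: lo_def)
        then show ?thesis using k True by (intro exI[of _ "Suc j"]) auto
      next
        case False
        then have c: "lo l (Suc j) = Suc (hi l j)" using pair(1)[of l j] Suc assms by auto
        show ?thesis
        proof (cases "k \<le> hi l j")
          case True
          have jj: "1 \<le> j" "j \<le> 2*l-1" using \<open>j \<noteq> 0\<close> Suc.prems by auto
          obtain j' where "1 \<le> j' \<and> j' \<le> j \<and> lo l j' \<le> k \<and> k \<le> hi l j'"
            using Suc.IH[OF jj] True k by blast
          then show ?thesis by (intro exI[of _ j']) auto
        next
          case False
          then show ?thesis using c k by (intro exI[of _ "Suc j"]) auto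
        qed
      qed
    qed
  qed
  moreover have "hi l (2*l-1) = Bstar l + 1" by (simp add: hi_def)
  moreover have "1 \<le> 2*l-1" using assms by auto
  ultimately obtain j' where "1 \<le> j' \<and> j' \<le> 2*l-1 \<and> lo l j' \<le> k \<and> k \<le> hi l j'"
    using assms by fastforce
  then show ?thesis by blast
qed

lemma grp_neighbor:
  fixes l j j' k :: nat
  assumes "1 \<le> l" "1 \<le> j" "j \<le> 2*l-1" "1 \<le> j'" "j' \<le> 2*l-1"
    "lo l j \<le> k" "k \<le> hi l j" "lo l j' \<le> k + Mb l j'" "k \<le> hi l j' + Mb l j'"
  shows "j \<le> Suc j'" "j' \<le> Suc j"
proof -
  show "j \<le> Suc j'"
  proof (rule ccontr)
    assume "\<not> j \<le> Suc j'"
    then have jj: "Suc (Suc j') \<le> j" by auto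
    have a: "lo l (Suc j') = Suc (hi l j')" using pair(1)[of l j'] assms jj by auto
    have b: "Mb l j' \<le> Suc (hi l (Suc j')) - lo l (Suc j')" using pair(2)[of l j'] assms jj by auto
    have c: "lo l (Suc (Suc j')) = Suc (hi l (Suc j'))" using pair(1)[of l "Suc j'"] assms jj by auto
    have d: "lo l (Suc j') \<le> hi l (Suc j')" using F_basic(2)[of l "Suc j'"] assms jj by auto
    have e: "lo l (Suc (Suc j')) \<le> lo l j" using lo_mono(1)[of l "Suc (Suc j')" j] assms jj by auto
    show False using a b c d e assms by linarith
  qed
  show "j' \<le> Suc j"
  proof (rule ccontr)
    assume "\<not> j' \<le> Suc j"
    then have jj: "Suc (Suc j) \<le> j'" by auto
    define j0 where "j0 = j' - 1"
    have j0: "j' = Suc j0" "Suc j \<le> j0" using jj by (auto simp: j0_def)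
    have a: "lo l j' = Suc (hi l j0)" using pair(1)[of l j0] assms j0 by auto
    have b: "Mb l j' \<le> Suc (hi l j0) - lo l j0" using pair(3)[of l j0] assms j0 by auto
    have d: "lo l j0 \<le> hi l j0" using F_basic(2)[of l j0] assms j0 by auto
    have e: "hi l j < lo l j0" using hi_lt_lo[of l j j0] assms j0 by auto
    show False using a b d e assms by linarith
  qed
qed

lemma cnt_step:
  "card {i. 1 \<le> i \<and> i \<le> Suc k \<and> (v + i) mod 3 = m} =
   card {i. 1 \<le> i \<and> i \<le> k \<and> (v + i) mod 3 = m} + (if (v + Suc k) mod 3 = m then 1 else 0)"
proof -
  have "{i. 1 \<le> i \<and> i \<le> Suc k \<and> (v + i) mod 3 = m} =
    {i. 1 \<le> i \<and> i \<le> k \<and> (v + i) mod 3 = m} \<union> (if (v + Suc k) mod 3 = m then {Suc k} else {})"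
    by (auto simp: le_Suc_eq)
  moreover have "finite {i. 1 \<le> i \<and> i \<le> k \<and> (v + i) mod 3 = m}" by auto
  ultimately show ?thesis by auto
qed

lemma lt3: "(r::nat) < 3 \<Longrightarrow> r = 0 \<or> r = 1 \<or> r = 2" by arith

lemma mod3_aux: "(r::nat) < 3 \<Longrightarrow> a < 3 \<Longrightarrow> b < 3 \<Longrightarrow> ((r + a) mod 3 = (r + b) mod 3) = (a = b)"
  by (drule lt3, drule lt3, drule lt3) (elim disjE; simp)

lemma mod3_cancel: "((v::nat) + x) mod 3 = (v + y) mod 3 \<longleftrightarrow> x mod 3 = y mod 3"
proof -
  have "(v + x) mod 3 = (v mod 3 + x mod 3) mod 3" "(v + y) mod 3 = (v mod 3 + y mod 3) mod 3"
    by (simp_all add: mod_add_eq)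
  then show ?thesis using mod3_aux[of "v mod 3" "x mod 3" "y mod 3"] by simp
qed

lemma cnt_formula:
  assumes "d \<in> {1,2,3}"
  shows "card {i. 1 \<le> i \<and> i \<le> k \<and> (v + i) mod 3 = (v + d) mod 3} = (k + 3 - d) div 3"
proof (induction k)
  case 0
  have "{i::nat. 1 \<le> i \<and> i \<le> 0 \<and> (v + i) mod 3 = (v + d) mod 3} = {}" by auto
  then show ?case using assms by auto
next
  case (Suc k)
  have "((v + Suc k) mod 3 = (v + d) mod 3) = ((Suc k) mod 3 = d mod 3)" by (rule mod3_cancel)
  moreover have "(Suc k + 3 - d) div 3 = (k + 3 - d) div 3 + (if (Suc k) mod 3 = d mod 3 then 1 else 0)"
  proof -
    have "d = 1 \<or> d = 2 \<or> d = 3" using assms by auto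
    then show ?thesis by (elim disjE; simp; presburger)
  qed
  ultimately show ?case using cnt_step[where v=v and k=k and m="(v+d) mod 3"] Suc by simp
qed

lemma bal_step:
  fixes b ll :: "nat \<Rightarrow> nat" and v k :: nat
  assumes "v < 3"
    and p1: "b ((v+1) mod 3) \<le> b ((v+2) mod 3)" and p2: "b ((v+2) mod 3) \<le> b v"
    and p3: "b v \<le> b ((v+1) mod 3) + 1"
    and L: "\<And>m. m < 3 \<Longrightarrow> ll m = b m + card {i. 1 \<le> i \<and> i \<le> k \<and> (v + i) mod 3 = m}"
    and v': "v' = (v + k) mod 3"
  shows "ll ((v'+1) mod 3) \<le> ll ((v'+2) mod 3) \<and> ll ((v'+2) mod 3) \<le> ll v' \<and> ll v' \<le> ll ((v'+1) mod 3) + 1"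
proof -
  have m1: "(v + 1) mod 3 < 3" "(v+2) mod 3 < 3" by auto
  have c1: "ll ((v+1) mod 3) = b ((v+1) mod 3) + (k + 2) div 3"
    using L[OF m1(1)] cnt_formula[of 1 k v] by simp
  have c2: "ll ((v+2) mod 3) = b ((v+2) mod 3) + (k + 1) div 3"
    using L[OF m1(2)] cnt_formula[of 2 k v] by simp
  have c0: "ll v = b v + k div 3"
    using L[OF assms(1)] cnt_formula[of 3 k v] assms(1) by simp
  consider "k mod 3 = 0" | "k mod 3 = 1" | "k mod 3 = 2" by linarith
  then show ?thesis
  proof cases
    case 1
    then have e: "v' = v" "(k+2) div 3 = k div 3" "(k+1) div 3 = k div 3" using v' assms(1) by presburger+
    show ?thesis unfolding e(1) using e(2,3) c0 c1 c2 p1 p2 p3 by linarith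
  next
    case 2
    then have e: "v' = (v+1) mod 3" "(k+2) div 3 = k div 3 + 1" "(k+1) div 3 = k div 3"
      using v' assms(1) by presburger+
    have f: "((v+1) mod 3 + 1) mod 3 = (v+2) mod 3" "((v+1) mod 3 + 2) mod 3 = v"
      using lt3[OF assms(1)] by auto
    show ?thesis unfolding e(1) f using e(2,3) c0 c1 c2 p1 p2 p3 by linarith
  next
    case 3
    then have e: "v' = (v+2) mod 3" "(k+2) div 3 = k div 3 + 1" "(k+1) div 3 = k div 3 + 1"
      using v' assms(1) by presburger+
    have f: "((v+2) mod 3 + 1) mod 3 = v" "((v+2) mod 3 + 2) mod 3 = (v+1) mod 3"
      using lt3[OF assms(1)] by auto
    show ?thesis unfolding e(1) f using e(2,3) c0 c1 c2 p1 p2 p3 by linarith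
  qed
qed

lemma bal_range:
  fixes ll :: "nat \<Rightarrow> nat"
  assumes "v' < 3" "ll ((v'+1) mod 3) \<le> ll ((v'+2) mod 3) \<and> ll ((v'+2) mod 3) \<le> ll v' \<and> ll v' \<le> ll ((v'+1) mod 3) + 1"
    "m < 3" "m' < 3"
  shows "ll m \<le> ll m' + 1"
proof -
  have "m \<in> {(v'+1) mod 3, (v'+2) mod 3, v'}" "m' \<in> {(v'+1) mod 3, (v'+2) mod 3, v'}"
    using lt3[OF assms(1)] lt3[OF assms(3)] lt3[OF assms(4)] by auto
  then show ?thesis using assms(2) by auto
qed

lemma bal_minus:
  fixes ll :: "nat \<Rightarrow> nat"
  assumes "ll ((v'+1) mod 3) \<le> ll ((v'+2) mod 3) \<and> ll ((v'+2) mod 3) \<le> ll v' \<and> ll v' \<le> ll ((v'+1) mod 3) + 1"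
  shows "ll ((v'+1) mod 3) - 1 \<le> ll ((v'+2) mod 3) - 1 \<and> ll ((v'+2) mod 3) - 1 \<le> ll v' - 1 \<and> ll v' - 1 \<le> (ll ((v'+1) mod 3) - 1) + 1"
  using assms by auto

definition step_ok :: "nat \<Rightarrow> (nat \<Rightarrow> bool) \<Rightarrow> (nat \<Rightarrow> 'p::linorder) \<Rightarrow> (nat \<Rightarrow> bool)
    \<Rightarrow> (nat \<Rightarrow> nat \<Rightarrow> nat \<Rightarrow> nat list) \<Rightarrow> (nat \<Rightarrow> nat \<Rightarrow> nat \<Rightarrow> nat option)
    \<Rightarrow> (nat \<Rightarrow> nat option) \<Rightarrow> (nat \<Rightarrow> nat option) \<Rightarrow> (nat \<Rightarrow> nat \<Rightarrow> nat \<Rightarrow> nat option)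
    \<Rightarrow> (nat \<Rightarrow> nat \<Rightarrow> nat) \<Rightarrow> nat \<Rightarrow> bool" where
  "step_ok l a prio c buf out dep loss route u n \<longleftrightarrow>
     (let t = Suc n;
              E = arr_set a t \<union> outs l out n (grps l);
              C1 = arr_set a t \<union> outs l out n {1, 2};
              C2 = arr_set a t \<union> outs l out n {2 * l - 1};
              tg = tag l a prio buf out t;
              R = (\<lambda>j. {p \<in> E - set_option (dep t) - set_option (loss t). assigned l (tg p) j})
          in
            (if c t \<and> C1 \<noteq> {}
             then (\<exists>p. dep t = Some p \<and> p \<in> C1 \<and> (\<forall>p' \<in> C1. prio p' \<le> prio p))
             else dep t = None) \<and>
            (if \<not> c t \<and> a t \<and> qsys l buf out n = Bstar l
             then (\<exists>p. loss t = Some p \<and> p \<in> C2 \<and> (\<forall>p' \<in> C2. prio p \<le> prio p'))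
             else loss t = None) \<and>
            (\<forall>j \<in> grps l.
               let k = card (R j);
                   U = {(u t j + i) mod 12 | i. 1 \<le> i \<and> i \<le> k}
               in (\<forall>g < 12. route t j g \<noteq> None \<longleftrightarrow> g \<in> U) \<and>
                  bij_betw (\<lambda>g. the (route t j g)) U (R j) \<and>
                  u (Suc t) j = (u t j + k) mod 12) \<and>
            (\<forall>j \<in> grps l. \<forall>m < 3.
               \<exists>xs. distinct xs \<and>
                    set xs = {p. \<exists>g < 12. g mod 3 = m \<and> route t j g = Some p} \<and>
                    (let L = buf n j m @ xs in
                       out t j m = (if L = [] then None else Some (hd L)) \<and>
                       buf t j m \<in> set (subseqs (tl L)) \<and>
                       length (buf t j m) = min (Bmux l j) (length L - 1))))"

lemma sys_run_iff:
  "sys_run l a prio c buf out dep loss route u \<longleftrightarrow>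
     (\<forall>j m. buf 0 j m = [] \<and> out 0 j m = None) \<and> (\<forall>j. u 1 j = 0) \<and>
     (\<forall>n. step_ok l a prio c buf out dep loss route u n)"
  unfolding sys_run_def step_ok_def by (rule refl)

locale PQ =
  fixes l :: nat and a c :: "nat \<Rightarrow> bool" and prio :: "nat \<Rightarrow> 'p::linorder"
    and buf :: "nat \<Rightarrow> nat \<Rightarrow> nat \<Rightarrow> nat list" and out :: "nat \<Rightarrow> nat \<Rightarrow> nat \<Rightarrow> nat option"
    and dep loss :: "nat \<Rightarrow> nat option" and route :: "nat \<Rightarrow> nat \<Rightarrow> nat \<Rightarrow> nat option"
    and u :: "nat \<Rightarrow> nat \<Rightarrow> nat" and N :: nat
  assumes l1: "1 \<le> l" and inj: "inj_on prio {t. 0 < t \<and> a t}"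
    and init1: "\<forall>j m. buf 0 j m = [] \<and> out 0 j m = None" and init2: "\<forall>j. u 1 j = 0"
    and steps: "\<forall>n<N. step_ok l a prio c buf out dep loss route u n"
begin

definition "G = grps l"
definition "Sto n = stored l buf out n"
definition "S t = Sto (t - 1) \<union> arr_set a t"
definition "tg t = tag l a prio buf out t"
definition "E t = arr_set a t \<union> outs l out (t - 1) (grps l)"
definition "C1 t = arr_set a t \<union> outs l out (t - 1) {1, 2}"
definition "C2 t = arr_set a t \<union> outs l out (t - 1) {2 * l - 1}"
definition "R t j = {p \<in> E t - set_option (dep t) - set_option (loss t). assigned l (tg t p) j}"
definition "U t j = {(u t j + i) mod 12 | i. 1 \<le> i \<and> i \<le> card (R t j)}"
definition "Lv n j m = (case out n j m of None \<Rightarrow> [] | Some p \<Rightarrow> [p]) @ buf n j m"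
definition "Bt t p p' = {q \<in> S t. prio p \<le> prio q \<and> prio q \<le> prio p'}"

lemma step:
  assumes "n < N"
  shows "if c (Suc n) \<and> C1 (Suc n) \<noteq> {}
     then (\<exists>p. dep (Suc n) = Some p \<and> p \<in> C1 (Suc n) \<and> (\<forall>p' \<in> C1 (Suc n). prio p' \<le> prio p))
     else dep (Suc n) = None"
  and "if \<not> c (Suc n) \<and> a (Suc n) \<and> card (Sto n) = Bstar l
     then (\<exists>p. loss (Suc n) = Some p \<and> p \<in> C2 (Suc n) \<and> (\<forall>p' \<in> C2 (Suc n). prio p \<le> prio p'))
     else loss (Suc n) = None"
  and "\<forall>j\<in>G. (\<forall>g<12. route (Suc n) j g \<noteq> None \<longleftrightarrow> g \<in> U (Suc n) j) \<and>
     bij_betw (\<lambda>g. the (route (Suc n) j g)) (U (Suc n) j) (R (Suc n) j) \<and>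
     u (Suc (Suc n)) j = (u (Suc n) j + card (R (Suc n) j)) mod 12"
  and "\<forall>j\<in>G. \<forall>m<3. \<exists>xs. distinct xs \<and> set xs = {p. \<exists>g<12. g mod 3 = m \<and> route (Suc n) j g = Some p} \<and>
     out (Suc n) j m = (if buf n j m @ xs = [] then None else Some (hd (buf n j m @ xs))) \<and>
     buf (Suc n) j m \<in> set (subseqs (tl (buf n j m @ xs))) \<and>
     length (buf (Suc n) j m) = min (Bmux l j) (length (buf n j m @ xs) - 1)"
proof -
  have s: "step_ok l a prio c buf out dep loss route u n" using steps assms by auto
  have e: "E (Suc n) = arr_set a (Suc n) \<union> outs l out n (grps l)"
    "C1 (Suc n) = arr_set a (Suc n) \<union> outs l out n {1, 2}"
    "C2 (Suc n) = arr_set a (Suc n) \<union> outs l out n {2 * l - 1}"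
    "\<And>j. R (Suc n) j = {p \<in> arr_set a (Suc n) \<union> outs l out n (grps l) - set_option (dep (Suc n)) - set_option (loss (Suc n)). assigned l (tag l a prio buf out (Suc n) p) j}"
    "\<And>j. U (Suc n) j = {(u (Suc n) j + i) mod 12 | i. 1 \<le> i \<and> i \<le> card (R (Suc n) j)}"
    "card (Sto n) = qsys l buf out n"
    by (simp_all add: E_def C1_def C2_def R_def U_def tg_def Sto_def qsys_def)
  note s' = s[unfolded step_ok_def Let_def, folded e]
  show "if c (Suc n) \<and> C1 (Suc n) \<noteq> {}
     then (\<exists>p. dep (Suc n) = Some p \<and> p \<in> C1 (Suc n) \<and> (\<forall>p' \<in> C1 (Suc n). prio p' \<le> prio p))
     else dep (Suc n) = None" using conjunct1[OF s'] .
  show "if \<not> c (Suc n) \<and> a (Suc n) \<and> card (Sto n) = Bstar l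
     then (\<exists>p. loss (Suc n) = Some p \<and> p \<in> C2 (Suc n) \<and> (\<forall>p' \<in> C2 (Suc n). prio p \<le> prio p'))
     else loss (Suc n) = None" using conjunct1[OF conjunct2[OF s']] .
  show "\<forall>j\<in>G. (\<forall>g<12. route (Suc n) j g \<noteq> None \<longleftrightarrow> g \<in> U (Suc n) j) \<and>
     bij_betw (\<lambda>g. the (route (Suc n) j g)) (U (Suc n) j) (R (Suc n) j) \<and>
     u (Suc (Suc n)) j = (u (Suc n) j + card (R (Suc n) j)) mod 12"
    unfolding G_def U_def using conjunct1[OF conjunct2[OF conjunct2[OF s']]] .
  show "\<forall>j\<in>G. \<forall>m<3. \<exists>xs. distinct xs \<and> set xs = {p. \<exists>g<12. g mod 3 = m \<and> route (Suc n) j g = Some p} \<and>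
     out (Suc n) j m = (if buf n j m @ xs = [] then None else Some (hd (buf n j m @ xs))) \<and>
     buf (Suc n) j m \<in> set (subseqs (tl (buf n j m @ xs))) \<and>
     length (buf (Suc n) j m) = min (Bmux l j) (length (buf n j m @ xs) - 1)"
    unfolding G_def using conjunct2[OF conjunct2[OF conjunct2[OF s']]] .
qed

end

context PQ begin

definition good :: "nat \<Rightarrow> bool" where
  "good x \<longleftrightarrow> finite (S x) \<and> S x \<subseteq> {p. 0 < p \<and> p \<le> x \<and> a p} \<and>
    Sto x = S x - set_option (dep x) - set_option (loss x) \<and>
    (\<forall>p. dep x = Some p \<longrightarrow> p \<in> S x \<and> (\<forall>q\<in>S x. prio q \<le> prio p)) \<and>
    (\<forall>p. loss x = Some p \<longrightarrow> p \<in> S x \<and> (\<forall>q\<in>S x. prio p \<le> prio q)) \<and>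
    (dep x = None \<or> loss x = None) \<and>
    int (card (Sto x)) = int (card (Sto (x - 1))) + of_bool (a x) - of_bool (dep x \<noteq> None) - of_bool (loss x \<noteq> None) \<and>
    (dep x \<noteq> None \<longleftrightarrow> c x \<and> card (Sto (x - 1)) + of_bool (a x) > 0) \<and>
    (loss x \<noteq> None \<longleftrightarrow> \<not> c x \<and> card (Sto (x - 1)) = Bstar l \<and> a x) \<and>
    (\<forall>i. dep x = Some i \<longrightarrow> tg x i = 1) \<and>
    (\<forall>i. loss x = Some i \<longrightarrow> tg x i = Bstar l + 1)"

definition inv :: "nat \<Rightarrow> bool" where
  "inv n \<longleftrightarrow> (\<forall>x. 1 \<le> x \<and> x \<le> n \<longrightarrow> good x) \<and> finite (Sto n) \<and>
    Sto n \<subseteq> {p. 0 < p \<and> p \<le> n \<and> a p} \<and> card (Sto n) \<le> Bstar l \<and>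
    (\<forall>j\<in>G. \<forall>m<3. distinct (Lv n j m) \<and> length (Lv n j m) \<le> Mb l j \<and> (out n j m = None \<longrightarrow> buf n j m = [])) \<and>
    (\<forall>j\<in>G. \<forall>m<3. \<forall>j'\<in>G. \<forall>m'<3. (j, m) \<noteq> (j', m') \<longrightarrow> set (Lv n j m) \<inter> set (Lv n j' m') = {}) \<and>
    (\<forall>j\<in>G. \<forall>m<3. \<forall>i<length (Lv n j m). \<exists>s. 1 \<le> s \<and> s \<le> n \<and> i + (n - s) < Mb l j \<and>
        Lv n j m ! i \<in> S s \<and> lo l j \<le> tg s (Lv n j m ! i) \<and> tg s (Lv n j m ! i) \<le> hi l j) \<and>
    (\<forall>j\<in>G. length (buf n j ((u (Suc n) j mod 3 + 1) mod 3)) \<le> length (buf n j ((u (Suc n) j mod 3 + 2) mod 3)) \<and>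
        length (buf n j ((u (Suc n) j mod 3 + 2) mod 3)) \<le> length (buf n j (u (Suc n) j mod 3)) \<and>
        length (buf n j (u (Suc n) j mod 3)) \<le> length (buf n j ((u (Suc n) j mod 3 + 1) mod 3)) + 1)"

lemma G_iff: "j \<in> G \<longleftrightarrow> 1 \<le> j \<and> j \<le> 2*l-1"
  by (simp add: G_def grps_def)

lemma finite_G: "finite G" by (simp add: G_def grps_def)

lemma Sto_Lv: "Sto n = (\<Union>j\<in>G. \<Union>m\<in>{..<3}. set (Lv n j m))"
proof (rule set_eqI)
  fix x
  show "x \<in> Sto n \<longleftrightarrow> x \<in> (\<Union>j\<in>G. \<Union>m\<in>{..<3}. set (Lv n j m))"
  proof
    assume "x \<in> Sto n"
    then consider (b) j m where "j \<in> G" "m < 3" "x \<in> set (buf n j m)"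
      | (o) j m where "j \<in> G" "m < 3" "out n j m = Some x"
      unfolding Sto_def stored_def outs_def G_def by auto
    then show "x \<in> (\<Union>j\<in>G. \<Union>m\<in>{..<3}. set (Lv n j m))"
    proof cases
      case b then show ?thesis unfolding Lv_def by (auto split: option.splits)
    next
      case o then show ?thesis unfolding Lv_def by force
    qed
  next
    assume "x \<in> (\<Union>j\<in>G. \<Union>m\<in>{..<3}. set (Lv n j m))"
    then obtain j m where jm: "j \<in> G" "m < 3" "x \<in> set (Lv n j m)" by auto
    then consider "x \<in> set (buf n j m)" | "out n j m = Some x" unfolding Lv_def by (auto split: option.splits)
    then show "x \<in> Sto n"
    proof cases
      case 1 then show ?thesis using jm unfolding Sto_def stored_def G_def by auto
    next
      case 2 then show ?thesis using jm unfolding Sto_def stored_def outs_def G_def by auto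
    qed
  qed
qed

lemma outs_Lv: "outs l out n J = {p. \<exists>j\<in>J \<inter> G. \<exists>m<3. out n j m = Some p}"
  by (simp add: outs_def G_def)

lemma tg_eq: "tg t p = card {p' \<in> S t. prio p \<le> prio p'}"
  by (simp add: tg_def tag_def S_def Sto_def)

lemma S_Suc: "S (Suc n) = Sto n \<union> arr_set a (Suc n)"
  by (simp add: S_def)

lemma arr_set_sub: "arr_set a t \<subseteq> {t}" by (simp add: arr_set_def)

lemma inv_good: "inv n \<Longrightarrow> 1 \<le> x \<Longrightarrow> x \<le> n \<Longrightarrow> good x"
  by (simp add: inv_def)

lemma S_bound:
  assumes "inv n" "1 \<le> x" "x \<le> Suc n"
  shows "S x \<subseteq> {p. 0 < p \<and> p \<le> x \<and> a p}" "finite (S x)"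
proof -
  have "S x \<subseteq> {p. 0 < p \<and> p \<le> x \<and> a p} \<and> finite (S x)"
  proof (cases "x = Suc n")
    case True
    then show ?thesis using assms(1) by (auto simp: inv_def S_Suc arr_set_def)
  next
    case False
    then show ?thesis using inv_good[OF assms(1), of x] assms(2,3) unfolding good_def by auto
  qed
  then show "S x \<subseteq> {p. 0 < p \<and> p \<le> x \<and> a p}" "finite (S x)" by auto
qed

lemma inj_S: "inv n \<Longrightarrow> 1 \<le> x \<Longrightarrow> x \<le> Suc n \<Longrightarrow> inj_on prio (S x)"
proof -
  assume a: "inv n" "1 \<le> x" "x \<le> Suc n"
  have "S x \<subseteq> {t. 0 < t \<and> a t}" using S_bound(1)[OF a] by auto
  then show ?thesis using inj_on_subset[OF inj] by auto
qed

lemma S_step_sub: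
  assumes "inv n" "1 \<le> z" "z \<le> n"
  shows "S (Suc z) \<subseteq> S z \<union> {Suc z}"
proof -
  have "Sto z \<subseteq> S z" using inv_good[OF assms] unfolding good_def by auto
  then show ?thesis unfolding S_Suc using arr_set_sub by auto
qed

lemma T1:
  assumes "inv n" "1 \<le> x" "x \<le> y" "y \<le> Suc n"
  shows "S y \<subseteq> S x \<union> {x<..y}"
  using assms(3,4)
proof (induction y)
  case 0 then show ?case by simp
next
  case (Suc y)
  show ?case
  proof (cases "x = Suc y")
    case True then show ?thesis by auto
  next
    case False
    then have "x \<le> y" using Suc by auto
    then have "S y \<subseteq> S x \<union> {x<..y}" using Suc by auto
    moreover have "S (Suc y) \<subseteq> S y \<union> {Suc y}" using S_step_sub[OF assms(1)] \<open>x \<le> y\<close> assms(2) Suc by auto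
    ultimately show ?thesis using \<open>x \<le> y\<close> by (auto simp: subset_iff)
  qed
qed

lemma stay:
  assumes "inv n" "1 \<le> x" "x \<le> z" "z \<le> y" "y \<le> Suc n" "p \<in> S x" "p \<in> S y"
  shows "p \<in> S z"
proof -
  have "p \<le> x" using S_bound(1)[OF assms(1,2)] assms by auto
  moreover have "S y \<subseteq> S z \<union> {z<..y}" using T1[OF assms(1), of z y] assms by auto
  ultimately show ?thesis using assms by auto
qed

lemma T2:
  assumes "inv n" "1 \<le> x" "x \<le> y" "y \<le> Suc n" "p \<in> S x" "p \<in> S y"
  shows "tg y p \<le> tg x p + (y - x)"
proof -
  have "{p' \<in> S y. prio p \<le> prio p'} \<subseteq> {p' \<in> S x. prio p \<le> prio p'} \<union> {x<..y}"
    using T1[OF assms(1-4)] by auto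
  then have "card {p' \<in> S y. prio p \<le> prio p'} \<le> card ({p' \<in> S x. prio p \<le> prio p'} \<union> {x<..y})"
    using S_bound(2)[OF assms(1,2)] assms by (intro card_mono) auto
  also have "\<dots> \<le> card {p' \<in> S x. prio p \<le> prio p'} + card {x<..y}" by (rule card_Un_le)
  finally show ?thesis unfolding tg_eq by simp
qed

lemma T3step:
  assumes "inv n" "1 \<le> z" "z \<le> n" "p \<in> S z" "p \<in> S (Suc z)"
  shows "tg z p \<le> tg (Suc z) p + 1"
proof -
  have g: "good z" using inv_good assms by auto
  have sto: "Sto z = S z - set_option (dep z) - set_option (loss z)" using g unfolding good_def by auto
  have pz: "p \<le> z" using S_bound(1)[OF assms(1,2)] assms by auto
  have pSto: "p \<in> Sto z" using assms(5) pz unfolding S_Suc by (auto simp: arr_set_def split: if_splits)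
  have sub: "{p' \<in> S z. prio p \<le> prio p'} \<subseteq> {p' \<in> S (Suc z). prio p \<le> prio p'} \<union> set_option (dep z)"
  proof
    fix q assume q: "q \<in> {p' \<in> S z. prio p \<le> prio p'}"
    show "q \<in> {p' \<in> S (Suc z). prio p \<le> prio p'} \<union> set_option (dep z)"
    proof (cases "q \<in> set_option (dep z) \<or> q \<in> set_option (loss z)")
      case False
      then have "q \<in> Sto z" using sto q by auto
      then show ?thesis using q unfolding S_Suc by auto
    next
      case True
      moreover have "q \<notin> set_option (loss z)"
      proof
        assume ql: "q \<in> set_option (loss z)"
        then have "\<forall>q'\<in>S z. prio q \<le> prio q'" using g unfolding good_def by auto
        then have "prio q \<le> prio p" using assms(4) by auto
        then have "prio q = prio p" using q by auto
        moreover have "q \<in> S z" using q by auto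
        ultimately have "q = p" using inj_S[OF assms(1,2)] assms(3,4) by (auto dest: inj_onD)
        then show False using ql pSto sto by auto
      qed
      ultimately show ?thesis by auto
    qed
  qed
  have "card {p' \<in> S z. prio p \<le> prio p'} \<le> card ({p' \<in> S (Suc z). prio p \<le> prio p'} \<union> set_option (dep z))"
    using S_bound(2)[OF assms(1), of "Suc z"] assms by (intro card_mono[OF _ sub]) auto
  also have "\<dots> \<le> card {p' \<in> S (Suc z). prio p \<le> prio p'} + card (set_option (dep z))" by (rule card_Un_le)
  also have "\<dots> \<le> card {p' \<in> S (Suc z). prio p \<le> prio p'} + 1"
    by (cases "dep z") auto
  finally show ?thesis unfolding tg_eq .
qed

lemma T3:
  assumes "inv n" "1 \<le> x" "x \<le> y" "y \<le> Suc n" "p \<in> S x" "p \<in> S y"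
  shows "tg x p \<le> tg y p + (y - x)"
  using assms(3,4,6)
proof (induction y)
  case 0 then show ?case by simp
next
  case (Suc y)
  show ?case
  proof (cases "x = Suc y")
    case True then show ?thesis by simp
  next
    case False
    then have xy: "x \<le> y" using Suc by auto
    have py: "p \<in> S y" using stay[OF assms(1,2) xy, of "Suc y"] Suc assms(5) by auto
    have "tg x p \<le> tg y p + (y - x)" using Suc.IH xy Suc py by auto
    moreover have "tg y p \<le> tg (Suc y) p + 1" using T3step[OF assms(1), of y p] xy assms(2) Suc py by auto
    ultimately show ?thesis using xy by auto
  qed
qed

lemma T4:
  assumes "inv n" "1 \<le> x" "x \<le> y" "y \<le> Suc n"
  shows "card (Bt y p p') \<le> card (Bt x p p') + (y - x)"
proof -
  have "Bt y p p' \<subseteq> Bt x p p' \<union> {x<..y}" using T1[OF assms] unfolding Bt_def by auto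
  then have "card (Bt y p p') \<le> card (Bt x p p' \<union> {x<..y})"
    using S_bound(2)[OF assms(1,2)] assms by (intro card_mono) (auto simp: Bt_def)
  also have "\<dots> \<le> card (Bt x p p') + card {x<..y}" by (rule card_Un_le)
  finally show ?thesis by simp
qed

lemma T5:
  assumes "inv n" "1 \<le> x" "x \<le> Suc n" "p \<in> S x" "p' \<in> S x" "prio p \<le> prio p'"
  shows "card (Bt x p p') + tg x p' = tg x p + 1"
proof -
  have fin: "finite (S x)" using S_bound(2)[OF assms(1-3)] .
  have injS: "inj_on prio (S x)" using inj_S[OF assms(1-3)] .
  have A: "{q \<in> S x. prio p \<le> prio q} = Bt x p p' \<union> {q \<in> S x. prio p' < prio q}"
    unfolding Bt_def using assms(6) by auto
  have B: "{q \<in> S x. prio p' \<le> prio q} = insert p' {q \<in> S x. prio p' < prio q}"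
  proof
    show "{q \<in> S x. prio p' \<le> prio q} \<subseteq> insert p' {q \<in> S x. prio p' < prio q}"
    proof
      fix q assume q: "q \<in> {q \<in> S x. prio p' \<le> prio q}"
      show "q \<in> insert p' {q \<in> S x. prio p' < prio q}"
      proof (cases "prio p' = prio q")
        case True then have "q = p'" using injS q assms(5) by (auto dest: inj_onD)
        then show ?thesis by auto
      next
        case False then show ?thesis using q by auto
      qed
    qed
  qed (use assms(5) in auto)
  have c1: "card {q \<in> S x. prio p \<le> prio q} = card (Bt x p p') + card {q \<in> S x. prio p' < prio q}"
    unfolding A by (rule card_Un_disjoint) (use fin in \<open>auto simp: Bt_def\<close>)
  have c2: "card {q \<in> S x. prio p' \<le> prio q} = Suc (card {q \<in> S x. prio p' < prio q})"
    unfolding B by (rule card_insert_disjoint) (use fin in auto)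
  show ?thesis unfolding tg_eq using c1 c2 by simp
qed

end

context PQ begin

lemma GL:
  assumes "inv n" "y \<le> Suc n" "p \<in> S y" "p' \<in> S y" "prio p \<le> prio p'"
    "1 \<le> s" "s \<le> y" "1 \<le> s'" "s' \<le> y" "p \<in> S s" "p' \<in> S s'"
    "A \<le> tg s p" "tg s p \<le> B" "A \<le> tg s' p'" "tg s' p' \<le> B"
  shows "card (Bt y p p') \<le> B + 1 - A + (y - min s s')"
proof -
  define r where "r = max s s'"
  have r: "1 \<le> r" "r \<le> y" "s \<le> r" "s' \<le> r" using assms by (auto simp: r_def)
  have pr: "p \<in> S r" using stay[OF assms(1), of s r y p] assms r by auto
  have pr': "p' \<in> S r" using stay[OF assms(1), of s' r y p'] assms r by auto
  have c1: "card (Bt y p p') \<le> card (Bt r p p') + (y - r)" using T4[OF assms(1) r(1) r(2) assms(2)] .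
  have c2: "card (Bt r p p') + tg r p' = tg r p + 1" using T5[OF assms(1) r(1) _ pr pr' assms(5)] r assms by auto
  show ?thesis
  proof (cases "s \<le> s'")
    case True
    then have "r = s'" by (simp add: r_def)
    have "tg r p \<le> tg s p + (r - s)" using T2[OF assms(1), of s r p] assms r pr by auto
    then show ?thesis using c1 c2 \<open>r = s'\<close> True assms(12-15) r by auto
  next
    case False
    then have "r = s" by (simp add: r_def)
    have "tg s' p' \<le> tg r p' + (r - s')" using T3[OF assms(1), of s' r p'] assms r pr' by auto
    then show ?thesis using c1 c2 \<open>r = s\<close> False assms(12-15) r by auto
  qed
qed

end

locale PQs = PQ +
  fixes n :: nat
  assumes invn: "inv n"
begin

abbreviation "t \<equiv> Suc n"

lemma invD:
  "finite (Sto n)" "Sto n \<subseteq> {p. 0 < p \<and> p \<le> n \<and> a p}" "card (Sto n) \<le> Bstar l"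
  "\<And>j m. j \<in> G \<Longrightarrow> m < 3 \<Longrightarrow> distinct (Lv n j m)"
  "\<And>j m. j \<in> G \<Longrightarrow> m < 3 \<Longrightarrow> length (Lv n j m) \<le> Mb l j"
  "\<And>j m. j \<in> G \<Longrightarrow> m < 3 \<Longrightarrow> out n j m = None \<Longrightarrow> buf n j m = []"
  "\<And>j m j' m'. j \<in> G \<Longrightarrow> m < 3 \<Longrightarrow> j' \<in> G \<Longrightarrow> m' < 3 \<Longrightarrow> (j, m) \<noteq> (j', m') \<Longrightarrow>
     set (Lv n j m) \<inter> set (Lv n j' m') = {}"
  "\<And>j m i. j \<in> G \<Longrightarrow> m < 3 \<Longrightarrow> i < length (Lv n j m) \<Longrightarrow> \<exists>s. 1 \<le> s \<and> s \<le> n \<and> i + (n - s) < Mb l j \<and>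
        Lv n j m ! i \<in> S s \<and> lo l j \<le> tg s (Lv n j m ! i) \<and> tg s (Lv n j m ! i) \<le> hi l j"
  "\<And>j. j \<in> G \<Longrightarrow> length (buf n j ((u t j mod 3 + 1) mod 3)) \<le> length (buf n j ((u t j mod 3 + 2) mod 3)) \<and>
        length (buf n j ((u t j mod 3 + 2) mod 3)) \<le> length (buf n j (u t j mod 3)) \<and>
        length (buf n j (u t j mod 3)) \<le> length (buf n j ((u t j mod 3 + 1) mod 3)) + 1"
  using invn unfolding inv_def by blast+

lemma Sfin: "finite (S t)" using S_bound(2)[OF invn] by auto
lemma Sbnd: "S t \<subseteq> {p. 0 < p \<and> p \<le> t \<and> a p}" using S_bound(1)[OF invn] by auto
lemma injS: "inj_on prio (S t)" using inj_S[OF invn] by auto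

lemma t_notin: "t \<notin> Sto n" using invD(2) by auto

lemma cardS: "card (S t) = card (Sto n) + of_bool (a t)"
  using invD(1) t_notin unfolding S_Suc by (auto simp: arr_set_def)

lemma cardS_le: "card (S t) \<le> Bstar l + 1" using cardS invD(3) by auto

lemma tg_pos: "p \<in> S t \<Longrightarrow> 1 \<le> tg t p"
proof -
  assume "p \<in> S t"
  then have "p \<in> {p' \<in> S t. prio p \<le> prio p'}" by auto
  moreover have "finite {p' \<in> S t. prio p \<le> prio p'}" using Sfin by auto
  ultimately have "card {p' \<in> S t. prio p \<le> prio p'} \<noteq> 0" by (auto simp: card_eq_0_iff)
  then show ?thesis unfolding tg_eq by auto
qed

lemma tg_le: "tg t p \<le> card (S t)"
  unfolding tg_eq using Sfin by (intro card_mono) auto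

lemma Lv_split: "Lv n j m = (case out n j m of None \<Rightarrow> [] | Some p \<Rightarrow> [p]) @ buf n j m"
  by (simp add: Lv_def)

lemma buf_drop: "j \<in> G \<Longrightarrow> m < 3 \<Longrightarrow> buf n j m = drop 1 (Lv n j m)"
  using invD(6)[of j m] by (cases "out n j m") (auto simp: Lv_def)

lemma out_nth0: "out n j m = Some p \<Longrightarrow> Lv n j m ! 0 = p"
  by (simp add: Lv_def)

lemma nth0_out: "j \<in> G \<Longrightarrow> m < 3 \<Longrightarrow> 0 < length (Lv n j m) \<Longrightarrow> out n j m = Some (Lv n j m ! 0)"
  using invD(6)[of j m] by (cases "out n j m") (auto simp: Lv_def)

lemma outs_sub: "outs l out n J \<subseteq> Sto n"
  unfolding Sto_def stored_def outs_def by auto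

lemma E_sub: "E t \<subseteq> S t" "C1 t \<subseteq> E t" "C2 t \<subseteq> E t"
  using outs_sub unfolding E_def C1_def C2_def S_Suc outs_def by auto

lemma in_Sto_Lv:
  assumes "p \<in> Sto n"
  obtains j m i where "j \<in> G" "m < 3" "i < length (Lv n j m)" "Lv n j m ! i = p"
  using assms unfolding Sto_Lv by (auto simp: in_set_conv_nth)

lemma max_ex:
  assumes "S t \<noteq> {}"
  obtains p where "p \<in> S t" "\<forall>q\<in>S t. prio q \<le> prio p"
proof -
  have "finite (prio ` S t)" "prio ` S t \<noteq> {}" using Sfin assms by auto
  then have "Max (prio ` S t) \<in> prio ` S t" by (rule Max_in)
  then obtain p where "p \<in> S t" "prio p = Max (prio ` S t)" by auto
  moreover have "\<forall>q\<in>S t. prio q \<le> Max (prio ` S t)" using Sfin by auto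
  ultimately show ?thesis using that by auto
qed

lemma min_ex:
  assumes "S t \<noteq> {}"
  obtains p where "p \<in> S t" "\<forall>q\<in>S t. prio p \<le> prio q"
proof -
  have "finite (prio ` S t)" "prio ` S t \<noteq> {}" using Sfin assms by auto
  then have "Min (prio ` S t) \<in> prio ` S t" by (rule Min_in)
  then obtain p where "p \<in> S t" "prio p = Min (prio ` S t)" by auto
  moreover have "\<forall>q\<in>S t. Min (prio ` S t) \<le> prio q" using Sfin by auto
  ultimately show ?thesis using that by auto
qed

lemma tg_max: "p \<in> S t \<Longrightarrow> \<forall>q\<in>S t. prio q \<le> prio p \<Longrightarrow> tg t p = 1"
proof -
  assume a: "p \<in> S t" "\<forall>q\<in>S t. prio q \<le> prio p"
  have "{p' \<in> S t. prio p \<le> prio p'} = {p}"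
    using a injS by (auto dest: inj_onD intro: order.antisym)
  then show ?thesis unfolding tg_eq by simp
qed

lemma tg_min: "p \<in> S t \<Longrightarrow> \<forall>q\<in>S t. prio p \<le> prio q \<Longrightarrow> tg t p = card (S t)"
proof -
  assume a: "p \<in> S t" "\<forall>q\<in>S t. prio p \<le> prio q"
  have "{p' \<in> S t. prio p \<le> prio p'} = S t" using a by auto
  then show ?thesis unfolding tg_eq by simp
qed

lemma haz_top:
  assumes "p \<in> S t" "\<forall>q\<in>S t. prio q \<le> prio p"
  shows "p \<in> C1 t"
proof (cases "p \<in> arr_set a t")
  case True then show ?thesis unfolding C1_def by auto
next
  case False
  then have "p \<in> Sto n" using assms(1) unfolding S_Suc by auto
  then obtain j m i where jm: "j \<in> G" "m < 3" "i < length (Lv n j m)" "Lv n j m ! i = p"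
    by (rule in_Sto_Lv)
  obtain s where s: "1 \<le> s" "s \<le> n" "i + (n - s) < Mb l j" "p \<in> S s" "lo l j \<le> tg s p"
    using invD(8)[OF jm(1-3)] jm(4) by auto
  have "tg s p \<le> tg t p + (t - s)" using T3[OF invn s(1), of t p] s assms by auto
  moreover have "tg t p = 1" using tg_max assms by auto
  ultimately have lo1: "lo l j \<le> 1 + Mb l j - i" using s by auto
  have jG: "1 \<le> j" "j \<le> 2*l-1" using jm(1) G_iff by auto
  have "\<not> 3 \<le> j" using F_basic(6)[OF l1 jG] lo1 by auto
  then have "Mb l j = 1" using F_basic(8)[OF l1 jG] by auto
  then have "i = 0" using s(3) by auto
  then have "out n j m = Some p" using nth0_out[OF jm(1,2)] jm by auto
  moreover have "j \<in> {1, 2}" using \<open>\<not> 3 \<le> j\<close> jG by auto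
  ultimately show ?thesis unfolding C1_def outs_def using jm(1,2) by (auto simp: G_def)
qed

lemma haz_bot:
  assumes "p \<in> S t" "\<forall>q\<in>S t. prio p \<le> prio q" "card (S t) = Bstar l + 1"
  shows "p \<in> C2 t"
proof (cases "p \<in> arr_set a t")
  case True then show ?thesis unfolding C2_def by auto
next
  case False
  then have "p \<in> Sto n" using assms(1) unfolding S_Suc by auto
  then obtain j m i where jm: "j \<in> G" "m < 3" "i < length (Lv n j m)" "Lv n j m ! i = p"
    by (rule in_Sto_Lv)
  obtain s where s: "1 \<le> s" "s \<le> n" "i + (n - s) < Mb l j" "p \<in> S s" "tg s p \<le> hi l j"
    using invD(8)[OF jm(1-3)] jm(4) by auto
  have "tg t p \<le> tg s p + (t - s)" using T2[OF invn s(1), of t p] s assms by auto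
  moreover have "tg t p = Bstar l + 1" using tg_min assms by auto
  ultimately have hi1: "Bstar l + 1 + i \<le> hi l j + Mb l j" using s by auto
  have jG: "1 \<le> j" "j \<le> 2*l-1" using jm(1) G_iff by auto
  have "j = 2*l-1" using F_basic(7)[OF l1 jG] hi1 by auto
  then have "Mb l j = 1" using F_basic(8)[OF l1 jG] by auto
  then have "i = 0" using s(3) by auto
  then have "out n j m = Some p" using nth0_out[OF jm(1,2)] jm by auto
  then show ?thesis unfolding C2_def outs_def using jm(1,2) \<open>j = 2*l-1\<close> by (auto simp: G_def)
qed

end

locale PQt = PQs +
  assumes nN: "n < N"
begin

lemma dep_char:
  shows "dep t \<noteq> None \<longleftrightarrow> c t \<and> S t \<noteq> {}"
    and "dep t = Some p \<Longrightarrow> p \<in> S t \<and> (\<forall>q\<in>S t. prio q \<le> prio p)"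
proof -
  have st: "if c t \<and> C1 t \<noteq> {}
     then (\<exists>p. dep t = Some p \<and> p \<in> C1 t \<and> (\<forall>p' \<in> C1 t. prio p' \<le> prio p))
     else dep t = None" using step(1)[OF nN] .
  have A: "(dep t \<noteq> None \<longleftrightarrow> c t \<and> S t \<noteq> {}) \<and> (\<forall>p. dep t = Some p \<longrightarrow> p \<in> S t \<and> (\<forall>q\<in>S t. prio q \<le> prio p))"
  proof (cases "c t \<and> C1 t \<noteq> {}")
    case True
    then obtain p where p: "dep t = Some p" "p \<in> C1 t" "\<forall>p' \<in> C1 t. prio p' \<le> prio p" using st by auto
    have pS: "p \<in> S t" using p(2) E_sub by auto
    then have "S t \<noteq> {}" by auto
    then obtain g where g: "g \<in> S t" "\<forall>q\<in>S t. prio q \<le> prio g" by (rule max_ex)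
    have "g \<in> C1 t" using haz_top g by auto
    then have "prio g \<le> prio p" using p by auto
    then have "\<forall>q\<in>S t. prio q \<le> prio p" using g by (auto intro: order.trans)
    then show ?thesis using p pS True by auto
  next
    case False
    then have d: "dep t = None" using st by auto
    have "\<not> (c t \<and> S t \<noteq> {})"
    proof
      assume h: "c t \<and> S t \<noteq> {}"
      then obtain g where g: "g \<in> S t" "\<forall>q\<in>S t. prio q \<le> prio g" using max_ex by blast
      have "g \<in> C1 t" using haz_top g by auto
      then show False using False h by auto
    qed
    then show ?thesis using d by auto
  qed
  show "dep t \<noteq> None \<longleftrightarrow> c t \<and> S t \<noteq> {}" using A by auto
  show "dep t = Some p \<Longrightarrow> p \<in> S t \<and> (\<forall>q\<in>S t. prio q \<le> prio p)" using A by auto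
qed

lemma loss_char:
  shows "loss t \<noteq> None \<longleftrightarrow> \<not> c t \<and> a t \<and> card (Sto n) = Bstar l"
    and "loss t = Some p \<Longrightarrow> p \<in> S t \<and> (\<forall>q\<in>S t. prio p \<le> prio q)"
proof -
  have st: "if \<not> c t \<and> a t \<and> card (Sto n) = Bstar l
     then (\<exists>p. loss t = Some p \<and> p \<in> C2 t \<and> (\<forall>p' \<in> C2 t. prio p \<le> prio p'))
     else loss t = None" using step(2)[OF nN] .
  have A: "(loss t \<noteq> None \<longleftrightarrow> \<not> c t \<and> a t \<and> card (Sto n) = Bstar l) \<and>
      (\<forall>p. loss t = Some p \<longrightarrow> p \<in> S t \<and> (\<forall>q\<in>S t. prio p \<le> prio q))"
  proof (cases "\<not> c t \<and> a t \<and> card (Sto n) = Bstar l")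
    case True
    then obtain p where p: "loss t = Some p" "p \<in> C2 t" "\<forall>p' \<in> C2 t. prio p \<le> prio p'" using st by auto
    have pS: "p \<in> S t" using p(2) E_sub by auto
    then have "S t \<noteq> {}" by auto
    then obtain g where g: "g \<in> S t" "\<forall>q\<in>S t. prio g \<le> prio q" by (rule min_ex)
    have "card (S t) = Bstar l + 1" using cardS True by auto
    then have "g \<in> C2 t" using haz_bot g by auto
    then have "prio p \<le> prio g" using p by auto
    then have "\<forall>q\<in>S t. prio p \<le> prio q" using g by (auto intro: order.trans)
    then show ?thesis using p pS True by auto
  next
    case False
    then show ?thesis using st by auto
  qed
  show "loss t \<noteq> None \<longleftrightarrow> \<not> c t \<and> a t \<and> card (Sto n) = Bstar l" using A by auto
  show "loss t = Some p \<Longrightarrow> p \<in> S t \<and> (\<forall>q\<in>S t. prio p \<le> prio q)" using A by auto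
qed

lemma dep_loss: "dep t = None \<or> loss t = None"
  using dep_char(1) loss_char(1) by auto

lemma R_eq: "j \<in> G \<Longrightarrow> R t j = {p \<in> E t - set_option (dep t) - set_option (loss t). lo l j \<le> tg t p \<and> tg t p \<le> hi l j}"
proof -
  assume j: "j \<in> G"
  have jG: "1 \<le> j" "j \<le> 2*l-1" using j G_iff by auto
  have "\<And>p. p \<in> E t \<Longrightarrow> assigned l (tg t p) j \<longleftrightarrow> lo l j \<le> tg t p \<and> tg t p \<le> hi l j"
    using F_assigned[OF l1 jG] tg_le cardS_le by (meson le_trans)
  then show ?thesis unfolding R_def by auto
qed

lemma R_sub: "R t j \<subseteq> E t" unfolding R_def by auto

lemma R_disj: "j \<in> G \<Longrightarrow> j' \<in> G \<Longrightarrow> j \<noteq> j' \<Longrightarrow> R t j \<inter> R t j' = {}"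
  using R_eq grp_unique[OF l1] G_iff by auto

lemma R_cover: "(\<Union>j\<in>G. R t j) = E t - set_option (dep t) - set_option (loss t)"
proof
  show "(\<Union>j\<in>G. R t j) \<subseteq> E t - set_option (dep t) - set_option (loss t)" unfolding R_def by auto
  show "E t - set_option (dep t) - set_option (loss t) \<subseteq> (\<Union>j\<in>G. R t j)"
  proof
    fix p assume p: "p \<in> E t - set_option (dep t) - set_option (loss t)"
    then have pS: "p \<in> S t" using E_sub by auto
    have "1 \<le> tg t p" "tg t p \<le> Bstar l + 1" using tg_pos[OF pS] tg_le cardS_le by (auto intro: le_trans)
    then obtain j where "1 \<le> j \<and> j \<le> 2*l-1 \<and> lo l j \<le> tg t p \<and> tg t p \<le> hi l j"
      using grp_exists[OF l1] by blast
    then show "p \<in> (\<Union>j\<in>G. R t j)" using p R_eq G_iff by auto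
  qed
qed

lemma buf_E_disj:
  assumes "j \<in> G" "m < 3"
  shows "set (buf n j m) \<inter> E t = {}"
proof -
  have "x \<notin> E t" if x: "x \<in> set (buf n j m)" for x
  proof
    assume xE: "x \<in> E t"
    have "x \<in> Sto n" using x assms unfolding Sto_def stored_def G_def by auto
    then have "x \<notin> arr_set a t" using t_notin by (auto simp: arr_set_def)
    then obtain j' m' where jm': "j' \<in> G" "m' < 3" "out n j' m' = Some x"
      using xE unfolding E_def outs_def G_def by auto
    have x0: "Lv n j' m' ! 0 = x" "0 < length (Lv n j' m')" using jm' by (auto simp: Lv_def)
    obtain i where i: "i < length (buf n j m)" "buf n j m ! i = x" using x by (auto simp: in_set_conv_nth)
    have bd: "buf n j m = drop 1 (Lv n j m)" using buf_drop assms by auto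
    have xi: "Lv n j m ! (Suc i) = x" "Suc i < length (Lv n j m)" using i bd by auto
    show False
    proof (cases "(j, m) = (j', m')")
      case True
      then have "Lv n j m ! (Suc i) = Lv n j m ! 0" using xi x0 by auto
      moreover have dd: "distinct (Lv n j m)" using invD(4) assms by auto
      moreover have z: "0 < length (Lv n j m)" using xi(2) by linarith
      ultimately have "Suc i = 0" using nth_eq_iff_index_eq[OF dd xi(2) z] by auto
      then show False by simp
    next
      case False
      then have "set (Lv n j m) \<inter> set (Lv n j' m') = {}" using invD(7) assms jm' by auto
      moreover have "x \<in> set (Lv n j m)" "x \<in> set (Lv n j' m')" using xi x0 by (auto simp: in_set_conv_nth)
      ultimately show False by auto
    qed
  qed
  then show ?thesis by auto
qed

definition XP :: "nat \<Rightarrow> nat \<Rightarrow> nat list \<Rightarrow> bool" where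
  "XP j m ys \<longleftrightarrow> distinct ys \<and> set ys = {p. \<exists>g<12. g mod 3 = m \<and> route t j g = Some p} \<and>
     out t j m = (if buf n j m @ ys = [] then None else Some (hd (buf n j m @ ys))) \<and>
     buf t j m \<in> set (subseqs (tl (buf n j m @ ys))) \<and>
     length (buf t j m) = min (Bmux l j) (length (buf n j m @ ys) - 1)"

definition "xs j m = (SOME ys. XP j m ys)"
definition "L j m = buf n j m @ xs j m"

lemma XP: "j \<in> G \<Longrightarrow> m < 3 \<Longrightarrow> XP j m (xs j m)"
proof -
  assume a: "j \<in> G" "m < 3"
  have "\<exists>ys. XP j m ys" using step(4)[OF nN] a unfolding XP_def by blast
  then show ?thesis unfolding xs_def by (rule someI_ex)
qed

lemma route_facts:
  assumes "j \<in> G"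
  shows "\<forall>g<12. route t j g \<noteq> None \<longleftrightarrow> g \<in> U t j"
    "bij_betw (\<lambda>g. the (route t j g)) (U t j) (R t j)"
    "u (Suc t) j = (u t j + card (R t j)) mod 12"
  using step(3)[OF nN] assms by auto

lemma U_lt: "g \<in> U t j \<Longrightarrow> g < 12" unfolding U_def by auto

lemma set_xs:
  assumes "j \<in> G" "m < 3"
  shows "set (xs j m) = (\<lambda>g. the (route t j g)) ` {g \<in> U t j. g mod 3 = m}"
proof -
  have "set (xs j m) = {p. \<exists>g<12. g mod 3 = m \<and> route t j g = Some p}" using XP[OF assms] by (simp add: XP_def)
  also have "\<dots> = (\<lambda>g. the (route t j g)) ` {g \<in> U t j. g mod 3 = m}"
  proof
    show "{p. \<exists>g<12. g mod 3 = m \<and> route t j g = Some p} \<subseteq> (\<lambda>g. the (route t j g)) ` {g \<in> U t j. g mod 3 = m}"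
    proof
      fix p assume "p \<in> {p. \<exists>g<12. g mod 3 = m \<and> route t j g = Some p}"
      then obtain g where g: "g < 12" "g mod 3 = m" "route t j g = Some p" by auto
      then have "g \<in> U t j" using route_facts(1)[OF assms(1)] by auto
      then show "p \<in> (\<lambda>g. the (route t j g)) ` {g \<in> U t j. g mod 3 = m}" using g by (auto intro!: image_eqI[of _ _ g])
    qed
    show "(\<lambda>g. the (route t j g)) ` {g \<in> U t j. g mod 3 = m} \<subseteq> {p. \<exists>g<12. g mod 3 = m \<and> route t j g = Some p}"
    proof
      fix p assume "p \<in> (\<lambda>g. the (route t j g)) ` {g \<in> U t j. g mod 3 = m}"
      then obtain g where g: "g \<in> U t j" "g mod 3 = m" "p = the (route t j g)" by auto
      have "g < 12" using U_lt g by auto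
      then have "route t j g \<noteq> None" using route_facts(1)[OF assms(1)] g by auto
      then show "p \<in> {p. \<exists>g<12. g mod 3 = m \<and> route t j g = Some p}" using g \<open>g < 12\<close> by auto
    qed
  qed
  finally show ?thesis .
qed

lemma len_xs:
  assumes "j \<in> G" "m < 3"
  shows "length (xs j m) = card {g \<in> U t j. g mod 3 = m}"
proof -
  have d: "distinct (xs j m)" using XP[OF assms] by (simp add: XP_def)
  have "inj_on (\<lambda>g. the (route t j g)) (U t j)" using route_facts(2)[OF assms(1)] by (simp add: bij_betw_def)
  then have i: "inj_on (\<lambda>g. the (route t j g)) {g \<in> U t j. g mod 3 = m}" by (rule inj_on_subset) auto
  have "length (xs j m) = card (set (xs j m))" using distinct_card[OF d] by simp
  also have "\<dots> = card ((\<lambda>g. the (route t j g)) ` {g \<in> U t j. g mod 3 = m})" using set_xs[OF assms] by simp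
  also have "\<dots> = card {g \<in> U t j. g mod 3 = m}" by (rule card_image[OF i])
  finally show ?thesis .
qed

lemma xs_sub: "j \<in> G \<Longrightarrow> m < 3 \<Longrightarrow> set (xs j m) \<subseteq> R t j"
proof -
  assume a: "j \<in> G" "m < 3"
  have "(\<lambda>g. the (route t j g)) ` U t j = R t j" using route_facts(2)[OF a(1)] by (simp add: bij_betw_def)
  then show ?thesis using set_xs[OF a] by auto
qed

lemma xs_cover: "j \<in> G \<Longrightarrow> (\<Union>m\<in>{..<3}. set (xs j m)) = R t j"
proof -
  assume j: "j \<in> G"
  have "(\<Union>m\<in>{..<3}. set (xs j m)) = (\<lambda>g. the (route t j g)) ` (\<Union>m\<in>{..<3}. {g \<in> U t j. g mod 3 = m})"
    using set_xs[OF j] by auto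
  also have "(\<Union>m\<in>{..<3}. {g \<in> U t j. g mod 3 = m}) = U t j" by auto
  also have "(\<lambda>g. the (route t j g)) ` U t j = R t j" using route_facts(2)[OF j] by (simp add: bij_betw_def)
  finally show ?thesis .
qed

lemma xs_disj: "j \<in> G \<Longrightarrow> m < 3 \<Longrightarrow> m' < 3 \<Longrightarrow> m \<noteq> m' \<Longrightarrow> set (xs j m) \<inter> set (xs j m') = {}"
proof -
  assume a: "j \<in> G" "m < 3" "m' < 3" "m \<noteq> m'"
  have "inj_on (\<lambda>g. the (route t j g)) (U t j)" using route_facts(2)[OF a(1)] by (simp add: bij_betw_def)
  then show ?thesis using set_xs[OF a(1,2)] set_xs[OF a(1,3)] a(4) by (auto dest: inj_onD)
qed

lemma cnt_U:
  assumes "j \<in> G" "m < 3"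
  shows "card {g \<in> U t j. g mod 3 = m} = card {i. 1 \<le> i \<and> i \<le> card (R t j) \<and> (u t j mod 3 + i) mod 3 = m}"
proof -
  define k where "k = card (R t j)"
  define f where "f = (\<lambda>i. (u t j + i) mod 12)"
  have U: "U t j = f ` {1..k}" unfolding U_def f_def k_def by auto
  have "card (U t j) = k" using bij_betw_same_card[OF route_facts(2)[OF assms(1)]] k_def by simp
  then have "card (f ` {1..k}) = card {1..k}" using U by simp
  then have inj: "inj_on f {1..k}" by (rule eq_card_imp_inj_on[rotated]) simp
  have fm: "f i mod 3 = (u t j mod 3 + i) mod 3" for i
    unfolding f_def by (simp add: mod_mod_cancel mod_add_left_eq)
  have "{g \<in> U t j. g mod 3 = m} = f ` {i \<in> {1..k}. (u t j mod 3 + i) mod 3 = m}"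
    unfolding U using fm by auto
  moreover have "inj_on f {i \<in> {1..k}. (u t j mod 3 + i) mod 3 = m}" using inj by (rule inj_on_subset) auto
  ultimately have "card {g \<in> U t j. g mod 3 = m} = card {i \<in> {1..k}. (u t j mod 3 + i) mod 3 = m}"
    by (simp add: card_image)
  also have "{i \<in> {1..k}. (u t j mod 3 + i) mod 3 = m} = {i. 1 \<le> i \<and> i \<le> k \<and> (u t j mod 3 + i) mod 3 = m}" by auto
  finally show ?thesis by (simp add: k_def)
qed

end

context PQt begin

definition "X j = (\<Union>m\<in>{..<3}. set (buf n j m)) \<union> R t j"

lemma jG: "j \<in> G \<Longrightarrow> 1 \<le> j \<and> j \<le> 2*l-1" using G_iff by auto

lemma buf_sub_Sto: "j \<in> G \<Longrightarrow> m < 3 \<Longrightarrow> set (buf n j m) \<subseteq> Sto n"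
  unfolding Sto_def stored_def G_def by auto

lemma X_sub: "j \<in> G \<Longrightarrow> X j \<subseteq> S t"
  unfolding X_def using buf_sub_Sto R_sub E_sub unfolding S_Suc by blast

lemma wit:
  assumes "j \<in> G" "x \<in> X j"
  shows "\<exists>s. 1 \<le> s \<and> s \<le> t \<and> t - s \<le> Mb l j - 1 \<and> x \<in> S s \<and> lo l j \<le> tg s x \<and> tg s x \<le> hi l j"
proof -
  consider (b) m where "m < 3" "x \<in> set (buf n j m)" | (r) "x \<in> R t j" using assms(2) unfolding X_def by auto
  then show ?thesis
  proof cases
    case r
    then have "x \<in> E t" "lo l j \<le> tg t x" "tg t x \<le> hi l j" using R_eq[OF assms(1)] by auto
    then show ?thesis using E_sub by (intro exI[of _ t]) auto
  next
    case b
    obtain i where i: "i < length (buf n j m)" "buf n j m ! i = x" using b by (auto simp: in_set_conv_nth)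
    have bd: "buf n j m = drop 1 (Lv n j m)" using buf_drop assms(1) b by auto
    have xi: "Lv n j m ! (Suc i) = x" "Suc i < length (Lv n j m)" using i bd by auto
    obtain s where s: "1 \<le> s" "s \<le> n" "Suc i + (n - s) < Mb l j" "x \<in> S s" "lo l j \<le> tg s x" "tg s x \<le> hi l j"
      using invD(8)[OF assms(1) b(1) xi(2)] xi(1) by auto
    then show ?thesis by (intro exI[of _ s]) auto
  qed
qed

lemma Kb:
  assumes "j \<in> G"
  shows "card (X j) \<le> hi l j + 1 - lo l j + (Mb l j - 1)"
proof (cases "X j = {}")
  case True then show ?thesis by simp
next
  case False
  have fin: "finite (X j)" using X_sub[OF assms] Sfin by (rule finite_subset)
  have f1: "finite (prio ` X j)" "prio ` X j \<noteq> {}" using fin False by auto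
  obtain p where p: "p \<in> X j" "prio p = Min (prio ` X j)" using Min_in[OF f1] by auto
  obtain p' where p': "p' \<in> X j" "prio p' = Max (prio ` X j)" using Max_in[OF f1] by auto
  have sub: "X j \<subseteq> Bt t p p'"
    unfolding Bt_def using X_sub[OF assms] p p' fin by auto
  have le: "prio p \<le> prio p'" using p p'(1) Min_le[OF f1(1)] by auto
  obtain s where s: "1 \<le> s" "s \<le> t" "t - s \<le> Mb l j - 1" "p \<in> S s" "lo l j \<le> tg s p" "tg s p \<le> hi l j"
    using wit[OF assms p(1)] by auto
  obtain s' where s': "1 \<le> s'" "s' \<le> t" "t - s' \<le> Mb l j - 1" "p' \<in> S s'" "lo l j \<le> tg s' p'" "tg s' p' \<le> hi l j"
    using wit[OF assms p'(1)] by auto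
  have "card (Bt t p p') \<le> hi l j + 1 - lo l j + (t - min s s')"
    using GL[OF invn le_refl _ _ le s(1,2) s'(1,2) s(4) s'(4) s(5,6) s'(5,6)] X_sub[OF assms] p(1) p'(1) by auto
  moreover have "card (X j) \<le> card (Bt t p p')"
    using sub Sfin by (intro card_mono) (auto simp: Bt_def)
  moreover have "t - min s s' \<le> Mb l j - 1" using s s' by (auto simp: min_def)
  ultimately show ?thesis by linarith
qed

lemma buf_dist: "j \<in> G \<Longrightarrow> m < 3 \<Longrightarrow> distinct (buf n j m)"
  using buf_drop invD(4) by (metis distinct_drop)

lemma xs_dist: "j \<in> G \<Longrightarrow> m < 3 \<Longrightarrow> distinct (xs j m)"
  using XP by (simp add: XP_def)

lemma xs_E: "j \<in> G \<Longrightarrow> m < 3 \<Longrightarrow> set (xs j m) \<subseteq> E t"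
  using xs_sub R_sub by blast

lemma L_dist: "j \<in> G \<Longrightarrow> m < 3 \<Longrightarrow> distinct (L j m)"
proof -
  assume a: "j \<in> G" "m < 3"
  have "set (buf n j m) \<inter> set (xs j m) = {}" using buf_E_disj[OF a] xs_E[OF a] by blast
  then show ?thesis unfolding L_def using buf_dist[OF a] xs_dist[OF a] by simp
qed

lemma buf_disj:
  assumes "j \<in> G" "m < 3" "j' \<in> G" "m' < 3" "(j, m) \<noteq> (j', m')"
  shows "set (buf n j m) \<inter> set (buf n j' m') = {}"
proof -
  have "set (buf n j m) \<subseteq> set (Lv n j m)" "set (buf n j' m') \<subseteq> set (Lv n j' m')"
    using buf_drop assms by (metis set_drop_subset)+
  then show ?thesis using invD(7)[OF assms] by auto
qed

lemma xs_disj2: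
  assumes "j \<in> G" "m < 3" "j' \<in> G" "m' < 3" "(j, m) \<noteq> (j', m')"
  shows "set (xs j m) \<inter> set (xs j' m') = {}"
proof (cases "j = j'")
  case True
  then have "m \<noteq> m'" using assms by auto
  then show ?thesis using xs_disj True assms by auto
next
  case False
  then show ?thesis using R_disj[OF assms(1,3) False] xs_sub assms by blast
qed

lemma L_disj:
  assumes "j \<in> G" "m < 3" "j' \<in> G" "m' < 3" "(j, m) \<noteq> (j', m')"
  shows "set (L j m) \<inter> set (L j' m') = {}"
proof -
  have a: "set (buf n j m) \<inter> set (buf n j' m') = {}" "set (xs j m) \<inter> set (xs j' m') = {}"
    using buf_disj[OF assms] xs_disj2[OF assms] .
  have b: "set (buf n j m) \<inter> E t = {}" "set (buf n j' m') \<inter> E t = {}"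
    using buf_E_disj assms by auto
  have c: "set (xs j m) \<subseteq> E t" "set (xs j' m') \<subseteq> E t" using xs_E assms by auto
  show ?thesis unfolding L_def set_append using a b c by blast
qed

lemma L_union: "j \<in> G \<Longrightarrow> (\<Union>m\<in>{..<3}. set (L j m)) = X j"
  unfolding L_def X_def using xs_cover by auto

lemma sum_L: "j \<in> G \<Longrightarrow> (\<Sum>m<3. length (L j m)) = card (X j)"
proof -
  assume j: "j \<in> G"
  have "card (X j) = card (\<Union>m\<in>{..<3}. set (L j m))" using L_union[OF j] by simp
  also have "\<dots> = (\<Sum>m<3. card (set (L j m)))"
    by (rule card_UN_disjoint) (use L_disj[OF j _ j] in auto)
  also have "\<dots> = (\<Sum>m<3. length (L j m))" using L_dist[OF j] by (simp add: distinct_card)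
  finally show ?thesis by simp
qed

lemma len_L: "j \<in> G \<Longrightarrow> m < 3 \<Longrightarrow>
  length (L j m) = length (buf n j m) + card {i. 1 \<le> i \<and> i \<le> card (R t j) \<and> (u t j mod 3 + i) mod 3 = m}"
  unfolding L_def using len_xs cnt_U by simp

lemma u_next: "j \<in> G \<Longrightarrow> u (Suc t) j mod 3 = (u t j mod 3 + card (R t j)) mod 3"
  using route_facts(3) by (simp add: mod_mod_cancel mod_add_left_eq)

lemma bal_L:
  assumes "j \<in> G"
  shows "length (L j ((u (Suc t) j mod 3 + 1) mod 3)) \<le> length (L j ((u (Suc t) j mod 3 + 2) mod 3)) \<and>
         length (L j ((u (Suc t) j mod 3 + 2) mod 3)) \<le> length (L j (u (Suc t) j mod 3)) \<and>
         length (L j (u (Suc t) j mod 3)) \<le> length (L j ((u (Suc t) j mod 3 + 1) mod 3)) + 1"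
proof -
  define v where "v = u t j mod 3"
  have v3: "v < 3" by (simp add: v_def)
  have p: "length (buf n j ((v + 1) mod 3)) \<le> length (buf n j ((v + 2) mod 3))"
    "length (buf n j ((v + 2) mod 3)) \<le> length (buf n j v)"
    "length (buf n j v) \<le> length (buf n j ((v + 1) mod 3)) + 1"
    using invD(9)[OF assms] by (auto simp: v_def)
  show ?thesis
    using bal_step[where b = "\<lambda>m. length (buf n j m)" and ll = "\<lambda>m. length (L j m)" and v = v
        and k = "card (R t j)" and v' = "u (Suc t) j mod 3", OF v3 p]
      len_L[OF assms] u_next[OF assms] by (auto simp: v_def)
qed

lemma L_le_Mb:
  assumes "j \<in> G" "m < 3"
  shows "length (L j m) \<le> Mb l j"
proof (rule ccontr)
  assume h: "\<not> length (L j m) \<le> Mb l j"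
  have v3: "u (Suc t) j mod 3 < 3" by simp
  have r: "\<And>m'. m' < 3 \<Longrightarrow> length (L j m) \<le> length (L j m') + 1"
    using bal_range[OF v3 bal_L[OF assms(1)] assms(2)] by auto
  have "Mb l j \<le> length (L j 0)" "Mb l j \<le> length (L j 1)" "Mb l j \<le> length (L j 2)"
    using r[of 0] r[of 1] r[of 2] h by auto
  moreover have "length (L j m) \<le> length (L j 0) + length (L j 1) + length (L j 2) - 2 * Mb l j"
  proof -
    have "m = 0 \<or> m = 1 \<or> m = 2" using assms(2) by auto
    then show ?thesis using \<open>Mb l j \<le> length (L j 0)\<close> \<open>Mb l j \<le> length (L j 1)\<close> \<open>Mb l j \<le> length (L j 2)\<close> by auto
  qed
  moreover have "(\<Sum>m<3. length (L j m)) = length (L j 0) + length (L j 1) + length (L j 2)"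
    by (simp add: numeral_3_eq_3 numeral_2_eq_2)
  moreover have "card (X j) \<le> hi l j + 1 - lo l j + (Mb l j - 1)" using Kb[OF assms(1)] .
  moreover have "Suc (hi l j) - lo l j \<le> 2 * Mb l j" "1 \<le> Mb l j" using F_basic(3,4)[OF l1] jG[OF assms(1)] by auto
  ultimately show False using sum_L[OF assms(1)] h by linarith
qed

lemma Lv_t:
  assumes "j \<in> G" "m < 3"
  shows "Lv t j m = L j m" "out t j m = None \<Longrightarrow> buf t j m = []" "buf t j m = tl (L j m)"
proof -
  have xp: "XP j m (xs j m)" using XP[OF assms] .
  have o: "out t j m = (if L j m = [] then None else Some (hd (L j m)))" using xp by (simp add: XP_def L_def)
  have sb: "subseq (buf t j m) (tl (L j m))" using xp by (simp add: XP_def L_def)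
  have "length (L j m) \<le> Bmux l j + 1" using L_le_Mb[OF assms] F_basic(5)[OF l1] jG[OF assms(1)] by (meson le_trans)
  then have "length (buf t j m) = length (tl (L j m))" using xp by (simp add: XP_def L_def)
  then show bt: "buf t j m = tl (L j m)" using subseq_same_length sb by blast
  show "Lv t j m = L j m" unfolding Lv_def o bt by (cases "L j m") auto
  show "out t j m = None \<Longrightarrow> buf t j m = []" using o bt by (cases "L j m") auto
qed

end

context PQt begin

definition "Bufs = (\<Union>j\<in>G. \<Union>m\<in>{..<3}. set (buf n j m))"

lemma Sto_t: "Sto t = Bufs \<union> (E t - set_option (dep t) - set_option (loss t))"
proof -
  have "Sto t = (\<Union>j\<in>G. \<Union>m\<in>{..<3}. set (L j m))" unfolding Sto_Lv using Lv_t(1) by auto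
  also have "\<dots> = (\<Union>j\<in>G. X j)" using L_union by auto
  also have "\<dots> = Bufs \<union> (\<Union>j\<in>G. R t j)" unfolding X_def Bufs_def by auto
  finally show ?thesis using R_cover by simp
qed

lemma S_t_split: "S t = Bufs \<union> E t"
  unfolding S_Suc E_def Bufs_def Sto_def stored_def G_def by auto

lemma Bufs_E: "Bufs \<inter> E t = {}"
  unfolding Bufs_def using buf_E_disj by blast

lemma dep_E: "dep t = Some p \<Longrightarrow> p \<in> E t"
proof -
  assume d: "dep t = Some p"
  have st: "if c t \<and> C1 t \<noteq> {}
     then (\<exists>p. dep t = Some p \<and> p \<in> C1 t \<and> (\<forall>p' \<in> C1 t. prio p' \<le> prio p))
     else dep t = None" using step(1)[OF nN] .
  then have "p \<in> C1 t" using d by (auto split: if_splits)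
  then show ?thesis using E_sub by auto
qed

lemma loss_E: "loss t = Some p \<Longrightarrow> p \<in> E t"
proof -
  assume d: "loss t = Some p"
  have st: "if \<not> c t \<and> a t \<and> card (Sto n) = Bstar l
     then (\<exists>p. loss t = Some p \<and> p \<in> C2 t \<and> (\<forall>p' \<in> C2 t. prio p \<le> prio p'))
     else loss t = None" using step(2)[OF nN] .
  then have "p \<in> C2 t" using d by (auto split: if_splits)
  then show ?thesis using E_sub by auto
qed

lemma Sto_t_eq: "Sto t = S t - set_option (dep t) - set_option (loss t)"
proof -
  have "set_option (dep t) \<subseteq> E t" "set_option (loss t) \<subseteq> E t" using dep_E loss_E by (cases "dep t"; auto)+
  then have "set_option (dep t) \<inter> Bufs = {}" "set_option (loss t) \<inter> Bufs = {}" using Bufs_E by auto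
  then show ?thesis unfolding Sto_t S_t_split by auto
qed

lemma card_Sto_t: "card (Sto t) + of_bool (dep t \<noteq> None) + of_bool (loss t \<noteq> None) = card (S t)"
proof -
  have dS: "set_option (dep t) \<subseteq> S t" using dep_char(2) by (cases "dep t") auto
  have lS: "set_option (loss t) \<subseteq> S t" using loss_char(2) by (cases "loss t") auto
  show ?thesis
  proof (cases "dep t")
    case None
    then show ?thesis
    proof (cases "loss t")
      case None then show ?thesis using \<open>dep t = None\<close> Sto_t_eq by simp
    next
      case (Some q)
      then have "q \<in> S t" using lS by auto
      then show ?thesis using \<open>dep t = None\<close> Some Sto_t_eq card.remove[OF Sfin \<open>q \<in> S t\<close>] by simp
    qed
  next
    case (Some p)
    then have "loss t = None" using dep_loss by auto
    have "p \<in> S t" using dS Some by auto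
    then show ?thesis using \<open>loss t = None\<close> Some Sto_t_eq card.remove[OF Sfin \<open>p \<in> S t\<close>] by simp
  qed
qed

lemma good_t: "good t"
proof -
  have c1: "int (card (Sto t)) = int (card (Sto n)) + of_bool (a t) - of_bool (dep t \<noteq> None) - of_bool (loss t \<noteq> None)"
  proof -
    have e: "card (Sto t) + of_bool (dep t \<noteq> None) + of_bool (loss t \<noteq> None) = card (Sto n) + of_bool (a t)"
      using card_Sto_t cardS by simp
    have "int (card (Sto t) + of_bool (dep t \<noteq> None) + of_bool (loss t \<noteq> None)) = int (card (Sto n) + of_bool (a t))"
      using e by simp
    then show ?thesis by simp
  qed
  have c2: "dep t \<noteq> None \<longleftrightarrow> c t \<and> card (Sto n) + of_bool (a t) > 0"
  proof -
    have "(card (S t) > 0) = (S t \<noteq> {})" using Sfin by (simp add: card_gt_0_iff)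
    then show ?thesis using dep_char(1) cardS by simp
  qed
  have c3: "loss t \<noteq> None \<longleftrightarrow> \<not> c t \<and> card (Sto n) = Bstar l \<and> a t" using loss_char(1) by auto
  have c4: "\<forall>i. dep t = Some i \<longrightarrow> tg t i = 1" using dep_char(2) tg_max by blast
  have c5: "\<forall>i. loss t = Some i \<longrightarrow> tg t i = Bstar l + 1"
  proof (intro allI impI)
    fix i assume h: "loss t = Some i"
    then have "tg t i = card (S t)" using loss_char(2) tg_min by blast
    moreover have "card (S t) = Bstar l + 1" using h loss_char(1) cardS by auto
    ultimately show "tg t i = Bstar l + 1" by simp
  qed
  show ?thesis unfolding good_def
    using Sfin Sbnd Sto_t_eq dep_char(2) loss_char(2) dep_loss c1 c2 c3 c4 c5 by simp
qed

lemma card_Sto_t_le: "card (Sto t) \<le> Bstar l"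
proof -
  have "card (S t) \<le> Bstar l + 1" using cardS_le .
  moreover have "card (S t) = Bstar l + 1 \<Longrightarrow> dep t \<noteq> None \<or> loss t \<noteq> None"
  proof -
    assume h: "card (S t) = Bstar l + 1"
    then have "a t" "card (Sto n) = Bstar l" using cardS invD(3) by (cases "a t"; simp)+
    moreover have "S t \<noteq> {}" using h by auto
    ultimately show ?thesis using dep_char(1) loss_char(1) by auto
  qed
  ultimately show ?thesis
  proof (cases "card (S t) = Bstar l + 1")
    case True
    then have "dep t \<noteq> None \<or> loss t \<noteq> None" using \<open>card (S t) = Bstar l + 1 \<Longrightarrow> dep t \<noteq> None \<or> loss t \<noteq> None\<close> by auto
    then show ?thesis using card_Sto_t True by auto
  next
    case False
    then show ?thesis using card_Sto_t cardS_le by linarith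
  qed
qed

lemma wit_t:
  assumes "j \<in> G" "m < 3" "i < length (Lv t j m)"
  shows "\<exists>s. 1 \<le> s \<and> s \<le> t \<and> i + (t - s) < Mb l j \<and>
        Lv t j m ! i \<in> S s \<and> lo l j \<le> tg s (Lv t j m ! i) \<and> tg s (Lv t j m ! i) \<le> hi l j"
proof -
  have Lt: "Lv t j m = L j m" using Lv_t(1)[OF assms(1,2)] .
  have iL: "i < length (L j m)" using assms(3) Lt by simp
  have le: "length (L j m) \<le> Mb l j" using L_le_Mb[OF assms(1,2)] .
  show ?thesis
  proof (cases "i < length (buf n j m)")
    case True
    then have x: "Lv t j m ! i = buf n j m ! i" using Lt by (simp add: L_def nth_append)
    have bd: "buf n j m = drop 1 (Lv n j m)" using buf_drop assms by auto
    have xi: "buf n j m ! i = Lv n j m ! (Suc i)" "Suc i < length (Lv n j m)" using True bd by auto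
    obtain s where s: "1 \<le> s" "s \<le> n" "Suc i + (n - s) < Mb l j" "Lv n j m ! (Suc i) \<in> S s"
      "lo l j \<le> tg s (Lv n j m ! (Suc i))" "tg s (Lv n j m ! (Suc i)) \<le> hi l j"
      using invD(8)[OF assms(1,2) xi(2)] by auto
    show ?thesis using s x xi by (intro exI[of _ s]) auto
  next
    case False
    then have x: "Lv t j m ! i = xs j m ! (i - length (buf n j m))" using Lt by (simp add: L_def nth_append)
    have "i - length (buf n j m) < length (xs j m)" using iL False by (simp add: L_def)
    then have "Lv t j m ! i \<in> set (xs j m)" using x by auto
    then have r: "Lv t j m ! i \<in> R t j" using xs_sub assms by auto
    then have "Lv t j m ! i \<in> S t" "lo l j \<le> tg t (Lv t j m ! i)" "tg t (Lv t j m ! i) \<le> hi l j"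
      using R_eq[OF assms(1)] E_sub by auto
    then show ?thesis using iL le by (intro exI[of _ t]) auto
  qed
qed

lemma inv_t: "inv t"
proof -
  have g: "\<forall>x. 1 \<le> x \<and> x \<le> t \<longrightarrow> good x"
    using invn good_t unfolding inv_def by (auto simp: le_Suc_eq)
  have f: "finite (Sto t)" using Sto_t_eq Sfin by auto
  have b: "Sto t \<subseteq> {p. 0 < p \<and> p \<le> t \<and> a p}" using Sto_t_eq Sbnd by auto
  have A: "\<forall>j\<in>G. \<forall>m<3. distinct (Lv t j m) \<and> length (Lv t j m) \<le> Mb l j \<and> (out t j m = None \<longrightarrow> buf t j m = [])"
    using Lv_t L_dist L_le_Mb by auto
  have B: "\<forall>j\<in>G. \<forall>m<3. \<forall>j'\<in>G. \<forall>m'<3. (j, m) \<noteq> (j', m') \<longrightarrow> set (Lv t j m) \<inter> set (Lv t j' m') = {}"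
    using Lv_t L_disj by auto
  have C: "\<forall>j\<in>G. \<forall>m<3. \<forall>i<length (Lv t j m). \<exists>s. 1 \<le> s \<and> s \<le> t \<and> i + (t - s) < Mb l j \<and>
        Lv t j m ! i \<in> S s \<and> lo l j \<le> tg s (Lv t j m ! i) \<and> tg s (Lv t j m ! i) \<le> hi l j"
    using wit_t by blast
  have D: "\<forall>j\<in>G. length (buf t j ((u (Suc t) j mod 3 + 1) mod 3)) \<le> length (buf t j ((u (Suc t) j mod 3 + 2) mod 3)) \<and>
        length (buf t j ((u (Suc t) j mod 3 + 2) mod 3)) \<le> length (buf t j (u (Suc t) j mod 3)) \<and>
        length (buf t j (u (Suc t) j mod 3)) \<le> length (buf t j ((u (Suc t) j mod 3 + 1) mod 3)) + 1"
  proof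
    fix j assume j: "j \<in> G"
    have "\<And>m. m < 3 \<Longrightarrow> length (buf t j m) = length (L j m) - 1" using Lv_t(3)[OF j] by simp
    moreover have "(u (Suc t) j mod 3 + 1) mod 3 < 3" "(u (Suc t) j mod 3 + 2) mod 3 < 3" "u (Suc t) j mod 3 < 3" by auto
    ultimately show "length (buf t j ((u (Suc t) j mod 3 + 1) mod 3)) \<le> length (buf t j ((u (Suc t) j mod 3 + 2) mod 3)) \<and>
        length (buf t j ((u (Suc t) j mod 3 + 2) mod 3)) \<le> length (buf t j (u (Suc t) j mod 3)) \<and>
        length (buf t j (u (Suc t) j mod 3)) \<le> length (buf t j ((u (Suc t) j mod 3 + 1) mod 3)) + 1"
      using bal_minus[OF bal_L[OF j]] by simp
  qed
  show ?thesis unfolding inv_def using g f b card_Sto_t_le A B C D by simp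
qed

end

context PQ begin

lemma inv_0: "inv 0"
proof -
  have L0: "\<And>j m. Lv 0 j m = []" using init1 by (simp add: Lv_def)
  have S0: "Sto 0 = {}" unfolding Sto_Lv L0 by simp
  have b0: "\<And>j m. buf 0 j m = []" using init1 by simp
  show ?thesis unfolding inv_def using L0 S0 b0 by simp
qed

lemma inv_all: "n \<le> N \<Longrightarrow> inv n"
proof (induction n)
  case 0 show ?case by (rule inv_0)
next
  case (Suc n)
  then have "inv n" "n < N" by auto
  then interpret PQt l a c prio buf out dep loss route u N n by unfold_locales
  show ?case using inv_t .
qed

end

context PQs begin

lemma outs_group_card: "card {p. \<exists>m<3. out n j' m = Some p} \<le> 3"
proof -
  have "{p. \<exists>m<3. out n j' m = Some p} \<subseteq> (\<lambda>m. the (out n j' m)) ` {..<3}" by force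
  then have "card {p. \<exists>m<3. out n j' m = Some p} \<le> card ((\<lambda>m. the (out n j' m)) ` {..<(3::nat)})"
    by (intro card_mono) auto
  also have "\<dots> \<le> card {..<(3::nat)}" by (rule card_image_le) simp
  finally show ?thesis by simp
qed

lemma kbound:
  assumes j: "j \<in> G"
  shows "card {p \<in> E t. assigned l (tg t p) j} \<le> 10"
proof -
  have jG': "1 \<le> j" "j \<le> 2*l-1" using j G_iff by auto
  define Og where "Og = (\<lambda>j'. {p. \<exists>m<3. out n j' m = Some p})"
  have sub: "{p \<in> E t. assigned l (tg t p) j} \<subseteq> arr_set a t \<union> Og (j - 1) \<union> Og j \<union> Og (Suc j)"
  proof
    fix p assume p: "p \<in> {p \<in> E t. assigned l (tg t p) j}"
    have pS: "p \<in> S t" using p E_sub by auto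
    have tr: "lo l j \<le> tg t p" "tg t p \<le> hi l j"
      using p F_assigned[OF l1 jG'] tg_le[of p] cardS_le by auto
    show "p \<in> arr_set a t \<union> Og (j - 1) \<union> Og j \<union> Og (Suc j)"
    proof (cases "p \<in> arr_set a t")
      case True then show ?thesis by auto
    next
      case False
      then obtain j' m where jm: "j' \<in> G" "m < 3" "out n j' m = Some p"
        using p unfolding E_def outs_def G_def by auto
      have x0: "Lv n j' m ! 0 = p" "0 < length (Lv n j' m)" using jm by (auto simp: Lv_def)
      obtain s where s: "1 \<le> s" "s \<le> n" "0 + (n - s) < Mb l j'" "p \<in> S s"
        "lo l j' \<le> tg s p" "tg s p \<le> hi l j'" using invD(8)[OF jm(1,2) x0(2)] x0(1) by auto
      have a1: "tg t p \<le> tg s p + (t - s)" using T2[OF invn s(1), of t p] s pS by auto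
      have a2: "tg s p \<le> tg t p + (t - s)" using T3[OF invn s(1), of t p] s pS by auto
      have ts: "t - s \<le> Mb l j'" using s by auto
      have jG2: "1 \<le> j'" "j' \<le> 2*l-1" using jm(1) G_iff by auto
      have "j \<le> Suc j'" "j' \<le> Suc j"
        using grp_neighbor[OF l1 jG' jG2 tr, of] a1 a2 ts s(5,6) by auto
      then have "j' = j - 1 \<or> j' = j \<or> j' = Suc j" by auto
      then show ?thesis using jm unfolding Og_def by auto
    qed
  qed
  have fO: "finite (Og j')" for j'
  proof -
    have "Og j' \<subseteq> (\<lambda>m. the (out n j' m)) ` {..<3}" unfolding Og_def by force
    then show ?thesis by (rule finite_subset) simp
  qed
  have cO: "\<And>j'. card (Og j') \<le> 3" unfolding Og_def using outs_group_card by blast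
  have ca: "card (arr_set a t) \<le> 1" by (simp add: arr_set_def)
  have "card {p \<in> E t. assigned l (tg t p) j} \<le> card (arr_set a t \<union> Og (j - 1) \<union> Og j \<union> Og (Suc j))"
    using sub fO by (intro card_mono) (auto simp: arr_set_def)
  also have "\<dots> \<le> card (arr_set a t) + card (Og (j - 1)) + card (Og j) + card (Og (Suc j))"
    by (metis (no_types, lifting) add_le_mono card_Un_le le_refl order_trans)
  also have "\<dots> \<le> 10" using ca cO[of "j-1"] cO[of j] cO[of "Suc j"] by linarith
  finally show ?thesis .
qed

end

lemma forall_part:
  fixes l :: nat and a c :: "nat \<Rightarrow> bool" and prio :: "nat \<Rightarrow> 'p::linorder"
  assumes "l \<ge> 1" and "inj_on prio {t. 0 < t \<and> a t}"
    and run: "sys_run l a prio c buf out dep loss route u"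
  shows "priority_queue (Bstar l) a c (qsys l buf out) dep loss (tag l a prio buf out)"
proof -
  have r: "(\<forall>j m. buf 0 j m = [] \<and> out 0 j m = None)" "(\<forall>j. u 1 j = 0)"
    "\<forall>n. step_ok l a prio c buf out dep loss route u n" using run unfolding sys_run_iff by auto
  have q0: "qsys l buf out 0 = 0" using r(1) by (simp add: qsys_def stored_def outs_def)
  have gt: "int (qsys l buf out t) = int (qsys l buf out (t - 1)) + of_bool (a t) - of_bool (dep t \<noteq> None) - of_bool (loss t \<noteq> None) \<and>
        (dep t \<noteq> None \<longleftrightarrow> c t \<and> qsys l buf out (t - 1) + of_bool (a t) > 0) \<and>
        (loss t \<noteq> None \<longleftrightarrow> \<not> c t \<and> qsys l buf out (t - 1) = Bstar l \<and> a t) \<and>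
        (\<forall>i. dep t = Some i \<longrightarrow> tag l a prio buf out t i = 1) \<and>
        (\<forall>i. loss t = Some i \<longrightarrow> tag l a prio buf out t i = Bstar l + 1)" if t: "0 < t" for t
  proof -
    interpret P: PQ l a c prio buf out dep loss route u t
      using assms r by unfold_locales auto
    have "P.inv t" using P.inv_all by simp
    then have "P.good t" using t by (simp add: P.inv_def)
    then show ?thesis unfolding P.good_def P.Sto_def P.tg_def qsys_def by auto
  qed
  show ?thesis unfolding priority_queue_def using q0 gt by auto
qed

definition cdep :: "nat \<Rightarrow> (nat \<Rightarrow> bool) \<Rightarrow> (nat \<Rightarrow> 'p::linorder) \<Rightarrow> (nat \<Rightarrow> bool)
    \<Rightarrow> (nat \<Rightarrow> nat \<Rightarrow> nat option) \<Rightarrow> nat \<Rightarrow> nat option" where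
  "cdep l a prio c Ou n = (let C1 = arr_set a (Suc n) \<union> outs l (\<lambda>_. Ou) n {1, 2} in
     if c (Suc n) \<and> C1 \<noteq> {} then Some (SOME p. p \<in> C1 \<and> (\<forall>p'\<in>C1. prio p' \<le> prio p)) else None)"

definition closs :: "nat \<Rightarrow> (nat \<Rightarrow> bool) \<Rightarrow> (nat \<Rightarrow> 'p::linorder) \<Rightarrow> (nat \<Rightarrow> bool)
    \<Rightarrow> (nat \<Rightarrow> nat \<Rightarrow> nat list) \<Rightarrow> (nat \<Rightarrow> nat \<Rightarrow> nat option) \<Rightarrow> nat \<Rightarrow> nat option" where
  "closs l a prio c B Ou n = (let C2 = arr_set a (Suc n) \<union> outs l (\<lambda>_. Ou) n {2 * l - 1} in
     if \<not> c (Suc n) \<and> a (Suc n) \<and> qsys l (\<lambda>_. B) (\<lambda>_. Ou) n = Bstar l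
     then Some (SOME p. p \<in> C2 \<and> (\<forall>p'\<in>C2. prio p \<le> prio p')) else None)"

definition cR :: "nat \<Rightarrow> (nat \<Rightarrow> bool) \<Rightarrow> (nat \<Rightarrow> 'p::linorder) \<Rightarrow> (nat \<Rightarrow> bool)
    \<Rightarrow> (nat \<Rightarrow> nat \<Rightarrow> nat list) \<Rightarrow> (nat \<Rightarrow> nat \<Rightarrow> nat option) \<Rightarrow> nat \<Rightarrow> nat \<Rightarrow> nat set" where
  "cR l a prio c B Ou n j = {p \<in> arr_set a (Suc n) \<union> outs l (\<lambda>_. Ou) n (grps l)
      - set_option (cdep l a prio c Ou n) - set_option (closs l a prio c B Ou n).
      assigned l (tag l a prio (\<lambda>_. B) (\<lambda>_. Ou) (Suc n) p) j}"

definition cU :: "(nat \<Rightarrow> nat) \<Rightarrow> nat \<Rightarrow> nat \<Rightarrow> nat set" where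
  "cU V j k = {(V j + i) mod 12 | i. 1 \<le> i \<and> i \<le> k}"

definition crt :: "nat \<Rightarrow> (nat \<Rightarrow> bool) \<Rightarrow> (nat \<Rightarrow> 'p::linorder) \<Rightarrow> (nat \<Rightarrow> bool)
    \<Rightarrow> (nat \<Rightarrow> nat \<Rightarrow> nat list) \<Rightarrow> (nat \<Rightarrow> nat \<Rightarrow> nat option) \<Rightarrow> (nat \<Rightarrow> nat) \<Rightarrow> nat \<Rightarrow> nat \<Rightarrow> nat \<Rightarrow> nat option" where
  "crt l a prio c B Ou V n j = (SOME r. (\<forall>g<12. r g \<noteq> None \<longleftrightarrow> g \<in> cU V j (card (cR l a prio c B Ou n j))) \<and>
      bij_betw (\<lambda>g. the (r g)) (cU V j (card (cR l a prio c B Ou n j))) (cR l a prio c B Ou n j))"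

definition cxs :: "(nat \<Rightarrow> nat option) \<Rightarrow> nat \<Rightarrow> nat list" where
  "cxs r m = map (\<lambda>g. the (r g)) (filter (\<lambda>g. g mod 3 = m \<and> r g \<noteq> None) [0..<12])"

type_synonym cstate = "(nat \<Rightarrow> nat \<Rightarrow> nat list) \<times> (nat \<Rightarrow> nat \<Rightarrow> nat option) \<times> (nat \<Rightarrow> nat)"

definition nxt :: "nat \<Rightarrow> (nat \<Rightarrow> bool) \<Rightarrow> (nat \<Rightarrow> 'p::linorder) \<Rightarrow> (nat \<Rightarrow> bool) \<Rightarrow> nat \<Rightarrow> cstate \<Rightarrow> cstate" where
  "nxt l a prio c n st = (case st of (B, Ou, V) \<Rightarrow>
     (let L = (\<lambda>j m. B j m @ cxs (crt l a prio c B Ou V n j) m) in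
      ((\<lambda>j m. take (Bmux l j) (tl (L j m))),
       (\<lambda>j m. if L j m = [] then None else Some (hd (L j m))),
       (\<lambda>j. (V j + card (cR l a prio c B Ou n j)) mod 12))))"

primrec cst :: "nat \<Rightarrow> (nat \<Rightarrow> bool) \<Rightarrow> (nat \<Rightarrow> 'p::linorder) \<Rightarrow> (nat \<Rightarrow> bool) \<Rightarrow> nat \<Rightarrow> cstate" where
  "cst l a prio c 0 = ((\<lambda>j m. []), (\<lambda>j m. None), (\<lambda>j. 0))"
| "cst l a prio c (Suc n) = nxt l a prio c n (cst l a prio c n)"

definition "cbuf l a prio c n = fst (cst l a prio c n)"
definition "cout l a prio c n = fst (snd (cst l a prio c n))"
definition "cV l a prio c n = snd (snd (cst l a prio c n))"
definition "cu l a prio c t = (case t of 0 \<Rightarrow> (\<lambda>j. 0) | Suc n \<Rightarrow> cV l a prio c n)"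
definition "cdp l a prio c t = (case t of 0 \<Rightarrow> None | Suc n \<Rightarrow> cdep l a prio c (cout l a prio c n) n)"
definition "cls l a prio c t = (case t of 0 \<Rightarrow> None | Suc n \<Rightarrow> closs l a prio c (cbuf l a prio c n) (cout l a prio c n) n)"
definition "croute l a prio c t = (case t of 0 \<Rightarrow> (\<lambda>j g. None) | Suc n \<Rightarrow> crt l a prio c (cbuf l a prio c n) (cout l a prio c n) (cV l a prio c n) n)"

lemma cst_Suc:
  "cbuf l a prio c (Suc n) = (\<lambda>j m. take (Bmux l j) (tl (cbuf l a prio c n j m @ cxs (crt l a prio c (cbuf l a prio c n) (cout l a prio c n) (cV l a prio c n) n j) m)))"
  "cout l a prio c (Suc n) = (\<lambda>j m. if cbuf l a prio c n j m @ cxs (crt l a prio c (cbuf l a prio c n) (cout l a prio c n) (cV l a prio c n) n j) m = [] then None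
      else Some (hd (cbuf l a prio c n j m @ cxs (crt l a prio c (cbuf l a prio c n) (cout l a prio c n) (cV l a prio c n) n j) m)))"
  "cV l a prio c (Suc n) = (\<lambda>j. (cV l a prio c n j + card (cR l a prio c (cbuf l a prio c n) (cout l a prio c n) n j)) mod 12)"
proof -
  obtain B Ou V where e: "cst l a prio c n = (B, Ou, V)" by (cases "cst l a prio c n") auto
  show "cbuf l a prio c (Suc n) = (\<lambda>j m. take (Bmux l j) (tl (cbuf l a prio c n j m @ cxs (crt l a prio c (cbuf l a prio c n) (cout l a prio c n) (cV l a prio c n) n j) m)))"
    unfolding cbuf_def cout_def cV_def cst.simps e nxt_def by (simp only: prod.case Let_def fst_conv snd_conv)
  show "cout l a prio c (Suc n) = (\<lambda>j m. if cbuf l a prio c n j m @ cxs (crt l a prio c (cbuf l a prio c n) (cout l a prio c n) (cV l a prio c n) n j) m = [] then None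
      else Some (hd (cbuf l a prio c n j m @ cxs (crt l a prio c (cbuf l a prio c n) (cout l a prio c n) (cV l a prio c n) n j) m)))"
    unfolding cbuf_def cout_def cV_def cst.simps e nxt_def by (simp only: prod.case Let_def fst_conv snd_conv)
  show "cV l a prio c (Suc n) = (\<lambda>j. (cV l a prio c n j + card (cR l a prio c (cbuf l a prio c n) (cout l a prio c n) n j)) mod 12)"
    unfolding cbuf_def cout_def cV_def cst.simps e nxt_def by (simp only: prod.case Let_def fst_conv snd_conv)
qed

lemma outs_const: "outs l out n J = outs l (\<lambda>_. out n) n J"
  by (simp add: outs_def)

lemma stored_const: "stored l buf out n = stored l (\<lambda>_. buf n) (\<lambda>_. out n) n"
  by (simp add: stored_def outs_def)

lemma tag_const: "tag l a prio buf out (Suc n) = tag l a prio (\<lambda>_. buf n) (\<lambda>_. out n) (Suc n)"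
  by (rule ext) (simp add: tag_def stored_def outs_def)

lemma qsys_const: "qsys l buf out n = qsys l (\<lambda>_. buf n) (\<lambda>_. out n) n"
  by (simp add: qsys_def stored_def outs_def)

lemma outs_finite: "finite (outs l out n J)"
proof -
  have "outs l out n J \<subseteq> (\<lambda>(j, m). the (out n j m)) ` (grps l \<times> {..<3})"
    unfolding outs_def by force
  moreover have "finite (grps l \<times> {..<(3::nat)})" by (simp add: grps_def)
  ultimately show ?thesis by (rule finite_subset[OF _ finite_imageI])
qed

lemma max_exists:
  fixes prio :: "nat \<Rightarrow> 'p::linorder"
  assumes "finite A" "A \<noteq> {}"
  shows "\<exists>p. p \<in> A \<and> (\<forall>p'\<in>A. prio p' \<le> prio p)"
proof -
  have "Max (prio ` A) \<in> prio ` A" using assms by (intro Max_in) auto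
  then obtain p where "p \<in> A" "prio p = Max (prio ` A)" by auto
  then show ?thesis using assms by (intro exI[of _ p]) auto
qed

lemma min_exists:
  fixes prio :: "nat \<Rightarrow> 'p::linorder"
  assumes "finite A" "A \<noteq> {}"
  shows "\<exists>p. p \<in> A \<and> (\<forall>p'\<in>A. prio p \<le> prio p')"
proof -
  have "Min (prio ` A) \<in> prio ` A" using assms by (intro Min_in) auto
  then obtain p where "p \<in> A" "prio p = Min (prio ` A)" by auto
  then show ?thesis using assms by (intro exI[of _ p]) auto
qed

lemma inj_mod12:
  fixes v k :: nat
  assumes "k \<le> 12"
  shows "inj_on (\<lambda>i. (v + i) mod 12) {1..k}"
proof
  fix i i' assume i: "i \<in> {1..k}" "i' \<in> {1..k}" and e: "(v + i) mod 12 = (v + i') mod (12::nat)"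
  show "i = i'"
  proof (rule ccontr)
    assume "i \<noteq> i'"
    then consider "i < i'" | "i' < i" by linarith
    then show False
    proof cases
      case 1
      then have "(12::nat) dvd (v + i') - (v + i)" using e mod_eq_dvd_iff_nat[of "v + i" "v + i'" 12] by auto
      then have "(12::nat) dvd i' - i" by simp
      moreover have "0 < i' - i" "i' - i < 12" using 1 i assms by auto
      ultimately show False using dvd_imp_le by fastforce
    next
      case 2
      then have "(12::nat) dvd (v + i) - (v + i')" using e mod_eq_dvd_iff_nat[of "v + i'" "v + i" 12] by auto
      then have "(12::nat) dvd i - i'" by simp
      moreover have "0 < i - i'" "i - i' < 12" using 2 i assms by auto
      ultimately show False using dvd_imp_le by fastforce
    qed
  qed
qed

lemma cU_card:
  assumes "k \<le> 12"
  shows "card (cU V j k) = k" "cU V j k \<subseteq> {..<12}"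
proof -
  have "cU V j k = (\<lambda>i. (V j + i) mod 12) ` {1..k}" unfolding cU_def by auto
  then show "card (cU V j k) = k" using card_image[OF inj_mod12[OF assms]] by simp
  show "cU V j k \<subseteq> {..<12}" unfolding cU_def by auto
qed

lemma route_exists:
  assumes "finite A" "card A \<le> 12"
  shows "\<exists>r. (\<forall>g<12. r g \<noteq> None \<longleftrightarrow> g \<in> cU V j (card A)) \<and> bij_betw (\<lambda>g. the (r g)) (cU V j (card A)) A"
proof -
  have c: "card (cU V j (card A)) = card A" "cU V j (card A) \<subseteq> {..<12}" using cU_card[OF assms(2)] by auto
  have fU: "finite (cU V j (card A))" using c(2) finite_subset by blast
  obtain h where h: "bij_betw h (cU V j (card A)) A" using finite_same_card_bij[OF fU assms(1) c(1)] by auto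
  define r where "r = (\<lambda>g. if g \<in> cU V j (card A) then Some (h g) else None)"
  have "\<forall>g<12. r g \<noteq> None \<longleftrightarrow> g \<in> cU V j (card A)" unfolding r_def by auto
  moreover have "bij_betw (\<lambda>g. the (r g)) (cU V j (card A)) A"
    using h by (subst bij_betw_cong[where g = h]) (auto simp: r_def)
  ultimately show ?thesis by blast
qed

lemma cxs_facts:
  assumes "\<forall>g<12. r g \<noteq> None \<longleftrightarrow> g \<in> U" "inj_on (\<lambda>g. the (r g)) U"
  shows "distinct (cxs r m)" "set (cxs r m) = {p. \<exists>g<12. g mod 3 = m \<and> r g = Some p}"
proof -
  have sub: "set (filter (\<lambda>g. g mod 3 = m \<and> r g \<noteq> None) [0..<12]) \<subseteq> U" using assms(1) by auto
  show "distinct (cxs r m)" unfolding cxs_def distinct_map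
    using inj_on_subset[OF assms(2) sub] by simp
  show "set (cxs r m) = {p. \<exists>g<12. g mod 3 = m \<and> r g = Some p}"
    unfolding cxs_def by force
qed

lemma step_c:
  fixes l :: nat and a c :: "nat \<Rightarrow> bool" and prio :: "nat \<Rightarrow> 'p::linorder"
  assumes kb: "\<forall>j\<in>grps l. card (cR l a prio c (cbuf l a prio c n) (cout l a prio c n) n j) \<le> 12"
  shows "step_ok l a prio c (cbuf l a prio c) (cout l a prio c) (cdp l a prio c) (cls l a prio c)
           (croute l a prio c) (cu l a prio c) n"
proof -
  define B where "B = cbuf l a prio c n"
  define Ou where "Ou = cout l a prio c n"
  define V where "V = cV l a prio c n"
  define RR where "RR = cR l a prio c B Ou n"
  define rr where "rr = crt l a prio c B Ou V n"
  have o: "\<And>J. outs l (cout l a prio c) n J = outs l (\<lambda>_. Ou) n J" by (simp add: outs_def Ou_def)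
  have tg: "tag l a prio (cbuf l a prio c) (cout l a prio c) (Suc n) = tag l a prio (\<lambda>_. B) (\<lambda>_. Ou) (Suc n)"
    unfolding B_def Ou_def by (rule tag_const)
  have qs: "qsys l (cbuf l a prio c) (cout l a prio c) n = qsys l (\<lambda>_. B) (\<lambda>_. Ou) n"
    unfolding B_def Ou_def by (rule qsys_const)
  have d: "cdp l a prio c (Suc n) = cdep l a prio c Ou n" by (simp add: cdp_def Ou_def)
  have ls: "cls l a prio c (Suc n) = closs l a prio c B Ou n" by (simp add: cls_def B_def Ou_def)
  have rt: "croute l a prio c (Suc n) = rr" by (simp add: croute_def rr_def B_def Ou_def V_def)
  have bs: "cbuf l a prio c n = B" by (simp add: B_def)
  have us: "cu l a prio c (Suc n) = V" "cu l a prio c (Suc (Suc n)) = (\<lambda>j. (V j + card (RR j)) mod 12)"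
    by (simp_all add: cu_def V_def cst_Suc(3) RR_def B_def Ou_def)
  have bs2: "cbuf l a prio c (Suc n) = (\<lambda>j m. take (Bmux l j) (tl (B j m @ cxs (rr j) m)))"
    unfolding cst_Suc(1) B_def Ou_def V_def rr_def by (rule refl)
  have os2: "cout l a prio c (Suc n) = (\<lambda>j m. if B j m @ cxs (rr j) m = [] then None else Some (hd (B j m @ cxs (rr j) m)))"
    unfolding cst_Suc(2) B_def Ou_def V_def rr_def by (rule refl)
  have RRe: "\<And>j. {p \<in> arr_set a (Suc n) \<union> outs l (\<lambda>_. Ou) n (grps l) - set_option (cdep l a prio c Ou n) - set_option (closs l a prio c B Ou n).
      assigned l (tag l a prio (\<lambda>_. B) (\<lambda>_. Ou) (Suc n) p) j} = RR j"
    by (simp add: RR_def cR_def)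
  have fin1: "finite (arr_set a (Suc n) \<union> outs l (\<lambda>_. Ou) n J)" for J
    using outs_finite by (simp add: arr_set_def)
  have finR: "finite (RR j)" for j
    using fin1[of "grps l"] unfolding RR_def cR_def by (rule finite_subset[rotated]) auto
  have P1: "if c (Suc n) \<and> arr_set a (Suc n) \<union> outs l (\<lambda>_. Ou) n {1, 2} \<noteq> {}
     then (\<exists>p. cdep l a prio c Ou n = Some p \<and> p \<in> arr_set a (Suc n) \<union> outs l (\<lambda>_. Ou) n {1, 2} \<and>
          (\<forall>p' \<in> arr_set a (Suc n) \<union> outs l (\<lambda>_. Ou) n {1, 2}. prio p' \<le> prio p))
     else cdep l a prio c Ou n = None"
  proof (cases "c (Suc n) \<and> arr_set a (Suc n) \<union> outs l (\<lambda>_. Ou) n {1, 2} \<noteq> {}")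
    case True
    have "\<exists>p. p \<in> arr_set a (Suc n) \<union> outs l (\<lambda>_. Ou) n {1, 2} \<and> (\<forall>p'\<in>arr_set a (Suc n) \<union> outs l (\<lambda>_. Ou) n {1, 2}. prio p' \<le> prio p)"
      using max_exists[OF fin1] True by blast
    from someI_ex[OF this] show ?thesis using True unfolding cdep_def Let_def by auto
  next
    case False then show ?thesis unfolding cdep_def Let_def by auto
  qed
  have P2: "if \<not> c (Suc n) \<and> a (Suc n) \<and> qsys l (\<lambda>_. B) (\<lambda>_. Ou) n = Bstar l
     then (\<exists>p. closs l a prio c B Ou n = Some p \<and> p \<in> arr_set a (Suc n) \<union> outs l (\<lambda>_. Ou) n {2 * l - 1} \<and>
          (\<forall>p' \<in> arr_set a (Suc n) \<union> outs l (\<lambda>_. Ou) n {2 * l - 1}. prio p \<le> prio p'))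
     else closs l a prio c B Ou n = None"
  proof (cases "\<not> c (Suc n) \<and> a (Suc n) \<and> qsys l (\<lambda>_. B) (\<lambda>_. Ou) n = Bstar l")
    case True
    then have ne: "arr_set a (Suc n) \<union> outs l (\<lambda>_. Ou) n {2 * l - 1} \<noteq> {}" by (simp add: arr_set_def)
    have "\<exists>p. p \<in> arr_set a (Suc n) \<union> outs l (\<lambda>_. Ou) n {2 * l - 1} \<and> (\<forall>p'\<in>arr_set a (Suc n) \<union> outs l (\<lambda>_. Ou) n {2 * l - 1}. prio p \<le> prio p')"
      using min_exists[OF fin1 ne] by blast
    from someI_ex[OF this] show ?thesis using True unfolding closs_def Let_def by auto
  next
    case False then show ?thesis unfolding closs_def Let_def by auto
  qed
  have rrP: "(\<forall>g<12. rr j g \<noteq> None \<longleftrightarrow> g \<in> cU V j (card (RR j))) \<and> bij_betw (\<lambda>g. the (rr j g)) (cU V j (card (RR j))) (RR j)"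
    if j: "j \<in> grps l" for j
  proof -
    have "card (RR j) \<le> 12" using kb j by (simp add: RR_def B_def Ou_def)
    then have "\<exists>r. (\<forall>g<12. r g \<noteq> None \<longleftrightarrow> g \<in> cU V j (card (RR j))) \<and> bij_betw (\<lambda>g. the (r g)) (cU V j (card (RR j))) (RR j)"
      by (rule route_exists[OF finR])
    from someI_ex[OF this] show ?thesis unfolding rr_def crt_def RR_def .
  qed
  have P3: "\<forall>j\<in>grps l. (\<forall>g<12. rr j g \<noteq> None \<longleftrightarrow> g \<in> {(V j + i) mod 12 | i. 1 \<le> i \<and> i \<le> card (RR j)}) \<and>
      bij_betw (\<lambda>g. the (rr j g)) {(V j + i) mod 12 | i. 1 \<le> i \<and> i \<le> card (RR j)} (RR j) \<and>
      (V j + card (RR j)) mod 12 = (V j + card (RR j)) mod 12"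
    using rrP unfolding cU_def by blast
  have P4: "\<forall>j\<in>grps l. \<forall>m<3. \<exists>xs. distinct xs \<and> set xs = {p. \<exists>g<12. g mod 3 = m \<and> rr j g = Some p} \<and>
      (if B j m @ cxs (rr j) m = [] then None else Some (hd (B j m @ cxs (rr j) m))) =
        (if B j m @ xs = [] then None else Some (hd (B j m @ xs))) \<and>
      take (Bmux l j) (tl (B j m @ cxs (rr j) m)) \<in> set (subseqs (tl (B j m @ xs))) \<and>
      length (take (Bmux l j) (tl (B j m @ cxs (rr j) m))) = min (Bmux l j) (length (B j m @ xs) - 1)"
  proof (intro ballI allI impI)
    fix j m assume j: "j \<in> grps l" and m: "m < (3::nat)"
    have r: "\<forall>g<12. rr j g \<noteq> None \<longleftrightarrow> g \<in> cU V j (card (RR j))" "inj_on (\<lambda>g. the (rr j g)) (cU V j (card (RR j)))"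
      using rrP[OF j] by (auto simp: bij_betw_def)
    show "\<exists>xs. distinct xs \<and> set xs = {p. \<exists>g<12. g mod 3 = m \<and> rr j g = Some p} \<and>
      (if B j m @ cxs (rr j) m = [] then None else Some (hd (B j m @ cxs (rr j) m))) =
        (if B j m @ xs = [] then None else Some (hd (B j m @ xs))) \<and>
      take (Bmux l j) (tl (B j m @ cxs (rr j) m)) \<in> set (subseqs (tl (B j m @ xs))) \<and>
      length (take (Bmux l j) (tl (B j m @ cxs (rr j) m))) = min (Bmux l j) (length (B j m @ xs) - 1)"
      using cxs_facts[OF r, of m] by (intro exI[of _ "cxs (rr j) m"]) (auto intro: prefix_imp_subseq take_is_prefix)
  qed
  show ?thesis
    unfolding step_ok_def Let_def o tg qs d ls rt bs us bs2 os2 RRe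
    using P1 P2 P3 P4 by simp
qed

lemma exists_part:
  fixes l :: nat and a c :: "nat \<Rightarrow> bool" and prio :: "nat \<Rightarrow> 'p::linorder"
  assumes l1: "l \<ge> 1" and inj: "inj_on prio {t. 0 < t \<and> a t}"
  shows "\<exists>buf out dep loss route u. sys_run l a prio c buf out dep loss route u"
proof -
  have i1: "\<forall>j m. cbuf l a prio c 0 j m = [] \<and> cout l a prio c 0 j m = None"
    by (simp add: cbuf_def cout_def)
  have i2: "\<forall>j. cu l a prio c 1 j = 0" by (simp add: cu_def cV_def)
  have all: "step_ok l a prio c (cbuf l a prio c) (cout l a prio c) (cdp l a prio c) (cls l a prio c)
           (croute l a prio c) (cu l a prio c) n" for n
  proof (induction n rule: less_induct)
    case (less n)
    interpret P: PQ l a c prio "cbuf l a prio c" "cout l a prio c" "cdp l a prio c" "cls l a prio c"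
      "croute l a prio c" "cu l a prio c" n
      using l1 inj i1 i2 less by unfold_locales auto
    have iv: "P.inv n" using P.inv_all by simp
    interpret Q: PQs l a c prio "cbuf l a prio c" "cout l a prio c" "cdp l a prio c" "cls l a prio c"
      "croute l a prio c" "cu l a prio c" n n
      using iv by unfold_locales
    have "card (cR l a prio c (cbuf l a prio c n) (cout l a prio c n) n j) \<le> 12" if j: "j \<in> grps l" for j
    proof -
      have "cR l a prio c (cbuf l a prio c n) (cout l a prio c n) n j \<subseteq>
          {p \<in> P.E (Suc n). assigned l (P.tg (Suc n) p) j}"
        unfolding cR_def P.E_def P.tg_def tag_const[symmetric] outs_const[symmetric] by auto
      moreover have "finite {p \<in> P.E (Suc n). assigned l (P.tg (Suc n) p) j}"
        unfolding P.E_def using outs_finite by (simp add: arr_set_def)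
      ultimately have "card (cR l a prio c (cbuf l a prio c n) (cout l a prio c n) n j) \<le>
          card {p \<in> P.E (Suc n). assigned l (P.tg (Suc n) p) j}" by (rule card_mono[rotated])
      also have "\<dots> \<le> 10" using Q.kbound j by (simp add: P.G_def)
      finally show ?thesis by simp
    qed
    then show ?case by (intro step_c) auto
  qed
  have "sys_run l a prio c (cbuf l a prio c) (cout l a prio c) (cdp l a prio c) (cls l a prio c)
           (croute l a prio c) (cu l a prio c)"
    unfolding sys_run_iff using i1 i2 all by auto
  then show ?thesis by blast
qed

theorem theorem1:
  fixes l :: nat and a c :: "nat \<Rightarrow> bool" and prio :: "nat \<Rightarrow> 'p::linorder"
  assumes "l \<ge> 1"
    and "inj_on prio {t. 0 < t \<and> a t}"
  shows "(\<exists>buf out dep loss route u. sys_run l a prio c buf out dep loss route u) \<and>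
         (\<forall>buf out dep loss route u. sys_run l a prio c buf out dep loss route u \<longrightarrow>
            priority_queue (Bstar l) a c (qsys l buf out) dep loss (tag l a prio buf out))"
  using exists_part[OF assms] forall_part[OF assms] by blast

end
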